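(* Consider a general-utility objective $G(\pi)=\mathcal{F}(\mu^\pi)$ as in the context and assume: (i) $\rho(s)\ge\rho_{\min}>0$ for all $s$; (ii) for every policy $\pi$, all entries of $\Gamma(\pi)$ lie in $[0,U]$ for some $U\ge0$; (iii) $G$ is $L$-smooth with respect to the Euclidean norm, i.e. $|G(\pi)-G(\pi')-\langle\nabla_\pi G(\pi'),\pi-\pi'\rangle|\le\frac{L}{2}\|\pi-\pi'\|_2^2$ for all policies $\pi,\pi'$. Let $\pi^*\in\arg\max_\pi G(\pi)$, let $\pi_0$ be an arbitrary policy and for $k\ge0$ let $\pi_{k+1}$ be obtained from $\pi_k$ by the projected Q-ascent update with step size $\eta=\rho_{\min}/L$. Then for every $K\ge1$, $$G(\pi^* )-G(\pi_K)\le\frac{32\,L\,\big(1+\frac{1}{(1-\gamma)\rho_{\min}}\big)}{(1-\gamma)^2\,\rho_{\min}\,K}.$$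
   Context: Finite MDP with state space $\mathcal{S}$, action space $\mathcal{A}$, transition kernel $\mathcal{P}$, initial distribution $\rho$, discount $\gamma\in[0,1)$. Policies are tables $\pi=(\pi(a\mid s))$ with $\pi(\cdot\mid s)\in\Delta_{\mathcal{A}}$, viewed as vectors in $\mathbb{R}^{|\mathcal{S}||\mathcal{A}|}$. The state-action occupancy measure is $\mu^\pi(s,a)=\sum_{s_0}\rho(s_0)\sum_{\tau\ge0}\gamma^\tau\Pr^\pi[s_\tau=s,a_\tau=a\mid s_0]$; $\mathcal{K}$ is the (convex) set of all occupancy measures, and $\pi\mapsto\mu^\pi$ is a bijection onto $\mathcal{K}$ with inverse $\pi(a\mid s)=\mu^\pi(s,a)/\sum_{a'}\mu^\pi(s,a')$. $\mathcal{F}:\mathcal{K}\to\mathbb{R}$ is concave and differentiable, $G(\pi)=\mathcal{F}(\mu^\pi)$, and the pseudo-reward is $\Gamma(\pi)=\nabla\mathcal{F}(\mu^\pi)\in\mathbb{R}^{\mathcal{S}\times\mathcal{A}}$. For a bounded $u$, $Q^\pi_u(s,a)=\mathbb{E}[\sum_{\tau\ge0}\gamma^\tau u(s_\tau,a_\tau)\mid s_0=s,a_0=a]$ under $\mathcal{P}$ and $\pi$. Projected Q-ascent (PQA) update: for every $s\in\mathcal{S}$, $\pi_{k+1}(\cdot\mid s)=\mathrm{Proj}_{\Delta_{\mathcal{A}}}\big[\pi_k(\cdot\mid s)+\eta\,Q^{\pi_k}_{\Gamma(\pi_k)}(s,\cdot)\big]$, with $\mathrm{Proj}_{\Delta_{\mathcal{A}}}$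 the Euclidean projection onto the probability simplex. *)

theory Defs
  imports "HOL-Analysis.Analysis"
begin

text \<open>Transition kernel: P s a s' = probability of moving to s' from s under action a.
  Policies and occupancy measures are vectors in real^('s \<times> 'a);
  for a policy p, p $ (s,a) is p(a | s).\<close>

definition prob_simplex :: "(real ^ 'a) set" where
  "prob_simplex = {p. (\<forall>a. 0 \<le> p $ a) \<and> (\<Sum>a\<in>UNIV. p $ a) = 1}"

definition policies :: "(real ^ ('s::finite \<times> 'a::finite)) set" where
  "policies = {p. \<forall>s. (\<chi> a. p $ (s, a)) \<in> prob_simplex}"

definition is_kernel :: "('s::finite \<Rightarrow> 'a::finite \<Rightarrow> 's \<Rightarrow> real) \<Rightarrow> bool" where
  "is_kernel P \<longleftrightarrow> (\<forall>s a s'. 0 \<le> P s a s') \<and> (\<forall>s a. (\<Sum>s'\<in>UNIV. P s a s') = 1)"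

definition is_distribution :: "('s::finite \<Rightarrow> real) \<Rightarrow> bool" where
  "is_distribution rho \<longleftrightarrow> (\<forall>s. 0 \<le> rho s) \<and> (\<Sum>s\<in>UNIV. rho s) = 1"

fun state_dist :: "('s::finite \<Rightarrow> 'a::finite \<Rightarrow> 's \<Rightarrow> real) \<Rightarrow> ('s \<Rightarrow> real)
    \<Rightarrow> real ^ ('s \<times> 'a) \<Rightarrow> nat \<Rightarrow> 's \<Rightarrow> real" where
  "state_dist P rho p 0 = rho"
| "state_dist P rho p (Suc t) =
     (\<lambda>s'. \<Sum>s\<in>UNIV. \<Sum>a\<in>UNIV. state_dist P rho p t s * p $ (s, a) * P s a s')"

definition occ :: "('s::finite \<Rightarrow> 'a::finite \<Rightarrow> 's \<Rightarrow> real) \<Rightarrow> ('s \<Rightarrow> real) \<Rightarrow> real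
    \<Rightarrow> real ^ ('s \<times> 'a) \<Rightarrow> real ^ ('s \<times> 'a)" where
  "occ P rho \<gamma> p = (\<chi> x. (\<Sum>t. \<gamma> ^ t * (state_dist P rho p t (fst x) * p $ x)))"

fun sa_dist :: "('s::finite \<Rightarrow> 'a::finite \<Rightarrow> 's \<Rightarrow> real) \<Rightarrow> real ^ ('s \<times> 'a)
    \<Rightarrow> 's \<times> 'a \<Rightarrow> nat \<Rightarrow> 's \<times> 'a \<Rightarrow> real" where
  "sa_dist P p x0 0 = (\<lambda>x. if x = x0 then 1 else 0)"
| "sa_dist P p x0 (Suc t) =
     (\<lambda>(s', a'). \<Sum>x\<in>UNIV. sa_dist P p x0 t x * P (fst x) (snd x) s' * p $ (s', a'))"

definition Qfun :: "('s::finite \<Rightarrow> 'a::finite \<Rightarrow> 's \<Rightarrow> real) \<Rightarrow> real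
    \<Rightarrow> real ^ ('s \<times> 'a) \<Rightarrow> real ^ ('s \<times> 'a) \<Rightarrow> real ^ ('s \<times> 'a)" where
  "Qfun P \<gamma> p u = (\<chi> x0. (\<Sum>t. \<gamma> ^ t * (\<Sum>x\<in>UNIV. sa_dist P p x0 t x * u $ x)))"

definition occ_set :: "('s::finite \<Rightarrow> 'a::finite \<Rightarrow> 's \<Rightarrow> real) \<Rightarrow> ('s \<Rightarrow> real) \<Rightarrow> real
    \<Rightarrow> (real ^ ('s \<times> 'a)) set" where
  "occ_set P rho \<gamma> = occ P rho \<gamma> ` policies"

definition grad :: "(real ^ 'n::finite \<Rightarrow> real) \<Rightarrow> real ^ 'n \<Rightarrow> real ^ 'n" where
  "grad F mu = (\<chi> i. frechet_derivative F (at mu) (axis i 1))"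

definition pseudo_reward where
  "pseudo_reward P rho \<gamma> F p = grad F (occ P rho \<gamma> p)"

definition pqa_step :: "('s::finite \<Rightarrow> 'a::finite \<Rightarrow> 's \<Rightarrow> real) \<Rightarrow> ('s \<Rightarrow> real) \<Rightarrow> real
    \<Rightarrow> (real ^ ('s \<times> 'a) \<Rightarrow> real) \<Rightarrow> real \<Rightarrow> real ^ ('s \<times> 'a) \<Rightarrow> real ^ ('s \<times> 'a)" where
  "pqa_step P rho \<gamma> F \<eta> p =
     (let Q = Qfun P \<gamma> p (pseudo_reward P rho \<gamma> F p) in
      \<chi> x. closest_point prob_simplex (\<chi> b. p $ (fst x, b) + \<eta> * Q $ (fst x, b)) $ snd x)"

end

theory Submission
  imports Defs
begin


lemma sum_UNIV_pair: "(\<Sum>x\<in>UNIV. f x) = (\<Sum>s\<in>UNIV. \<Sum>a\<in>UNIV. f (s, a))"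
  for f :: "('s::finite \<times> 'a::finite) \<Rightarrow> 'b::comm_monoid_add"
  by (simp add: UNIV_Times_UNIV[symmetric] sum.cartesian_product del: UNIV_Times_UNIV)

lemma policiesD:
  assumes "p \<in> policies"
  shows "0 \<le> p $ (s,a)" "(\<Sum>a\<in>UNIV. p $ (s,a)) = 1"
  using assms by (auto simp: policies_def prob_simplex_def)

lemma policies_le1:
  assumes "p \<in> policies" shows "p $ (s,a) \<le> 1"
proof -
  have "p $ (s,a) \<le> (\<Sum>b\<in>UNIV. p $ (s,b))"
    by (rule member_le_sum) (auto intro: policiesD[OF assms])
  then show ?thesis using policiesD(2)[OF assms] by simp
qed

locale mdp =
  fixes P :: "'s::finite \<Rightarrow> 'a::finite \<Rightarrow> 's \<Rightarrow> real" and rho :: "'s \<Rightarrow> real" and \<gamma> :: real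
  assumes kernel: "is_kernel P" and init: "is_distribution rho" and g0: "0 \<le> \<gamma>" and g1: "\<gamma> < 1"
begin

lemma P_nonneg: "0 \<le> P s a s'" using kernel by (simp add: is_kernel_def)
lemma P_sum: "(\<Sum>s'\<in>UNIV. P s a s') = 1" using kernel by (simp add: is_kernel_def)
lemma rho_nonneg: "0 \<le> rho s" using init by (simp add: is_distribution_def)
lemma rho_sum: "(\<Sum>s\<in>UNIV. rho s) = 1" using init by (simp add: is_distribution_def)

lemma sd_nonneg: "p \<in> policies \<Longrightarrow> 0 \<le> state_dist P rho p t s"
  by (induction t arbitrary: s)
     (auto intro!: sum_nonneg mult_nonneg_nonneg rho_nonneg P_nonneg policiesD)

lemma sd_sum: "p \<in> policies \<Longrightarrow> (\<Sum>s\<in>UNIV. state_dist P rho p t s) = 1"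
proof (induction t)
  case 0 then show ?case by (simp add: rho_sum)
next
  case (Suc t)
  have "(\<Sum>s'\<in>UNIV. state_dist P rho p (Suc t) s')
      = (\<Sum>s'\<in>UNIV. \<Sum>s\<in>UNIV. \<Sum>a\<in>UNIV. state_dist P rho p t s * p $ (s, a) * P s a s')"
    by simp
  also have "\<dots> = (\<Sum>s\<in>UNIV. \<Sum>s'\<in>UNIV. \<Sum>a\<in>UNIV. state_dist P rho p t s * p $ (s, a) * P s a s')"
    by (rule sum.swap)
  also have "\<dots> = (\<Sum>s\<in>UNIV. \<Sum>a\<in>UNIV. \<Sum>s'\<in>UNIV. state_dist P rho p t s * p $ (s, a) * P s a s')"
    by (intro sum.cong refl sum.swap)
  also have "\<dots> = (\<Sum>s\<in>UNIV. \<Sum>a\<in>UNIV. state_dist P rho p t s * p $ (s, a) * (\<Sum>s'\<in>UNIV. P s a s'))"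
    by (simp add: sum_distrib_left)
  also have "\<dots> = (\<Sum>s\<in>UNIV. state_dist P rho p t s * (\<Sum>a\<in>UNIV. p $ (s, a)))"
    by (simp add: P_sum sum_distrib_left)
  also have "\<dots> = 1" using Suc by (simp add: policiesD)
  finally show ?case .
qed

lemma sd_le1: "p \<in> policies \<Longrightarrow> state_dist P rho p t s \<le> 1"
  by (metis sd_sum sd_nonneg member_le_sum finite UNIV_I)

definition dd where "dd p s = (\<Sum>t. \<gamma> ^ t * state_dist P rho p t s)"

lemma dd_summable: "p \<in> policies \<Longrightarrow> summable (\<lambda>t. \<gamma> ^ t * state_dist P rho p t s)"
proof (rule summable_comparison_test'[where g="\<lambda>t. \<gamma> ^ t"])
  show "summable (\<lambda>t. \<gamma> ^ t)" using g0 g1 by (simp add: summable_geometric)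
  fix t assume "p \<in> policies"
  then show "norm (\<gamma> ^ t * state_dist P rho p t s) \<le> \<gamma> ^ t"
    using sd_nonneg sd_le1 g0 by (simp add: abs_mult mult_left_le)
qed

lemma dd_split: "p \<in> policies \<Longrightarrow> dd p s = rho s + (\<Sum>t. \<gamma> ^ Suc t * state_dist P rho p (Suc t) s)"
  using suminf_split_head[OF dd_summable] by (simp add: dd_def)

lemma dd_ge_rho: "p \<in> policies \<Longrightarrow> rho s \<le> dd p s"
proof -
  assume p: "p \<in> policies"
  have "summable (\<lambda>t. \<gamma> ^ Suc t * state_dist P rho p (Suc t) s)"
    using summable_ignore_initial_segment[OF dd_summable[OF p], of 1] by simp
  moreover have "\<And>t. 0 \<le> \<gamma> ^ Suc t * state_dist P rho p (Suc t) s"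
    by (intro mult_nonneg_nonneg zero_le_power g0 sd_nonneg[OF p])
  ultimately have "0 \<le> (\<Sum>t. \<gamma> ^ Suc t * state_dist P rho p (Suc t) s)"
    by (intro suminf_nonneg)
  then show ?thesis using dd_split[OF p, of s] by linarith
qed

lemma dd_nonneg: "p \<in> policies \<Longrightarrow> 0 \<le> dd p s"
  by (rule order_trans[OF rho_nonneg dd_ge_rho])

lemma dd_sum: "p \<in> policies \<Longrightarrow> (\<Sum>s\<in>UNIV. dd p s) = 1 / (1 - \<gamma>)"
proof -
  assume p: "p \<in> policies"
  have "(\<Sum>s\<in>UNIV. dd p s) = (\<Sum>t. \<Sum>s\<in>UNIV. \<gamma> ^ t * state_dist P rho p t s)"
    unfolding dd_def by (rule suminf_sum[symmetric]) (rule dd_summable[OF p])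
  also have "\<dots> = (\<Sum>t. \<gamma> ^ t)"
    by (simp add: sum_distrib_left[symmetric] sd_sum[OF p])
  also have "\<dots> = 1 / (1 - \<gamma>)" using g0 g1 by (simp add: suminf_geometric)
  finally show ?thesis .
qed

lemma dd_le: "p \<in> policies \<Longrightarrow> dd p s \<le> 1 / (1 - \<gamma>)"
proof -
  assume p: "p \<in> policies"
  have "dd p s \<le> (\<Sum>s\<in>UNIV. dd p s)" by (rule member_le_sum) (auto intro: dd_nonneg[OF p])
  then show ?thesis using dd_sum[OF p] by simp
qed

lemma occ_eq: "p \<in> policies \<Longrightarrow> occ P rho \<gamma> p $ (s, a) = dd p s * p $ (s, a)"
proof -
  assume p: "p \<in> policies"
  have "occ P rho \<gamma> p $ (s,a) = (\<Sum>t. \<gamma>^t * (state_dist P rho p t s * p$(s,a)))"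
    by (simp add: occ_def)
  also have "\<dots> = (\<Sum>t. \<gamma>^t * state_dist P rho p t s * p$(s,a))"
    by (simp only: mult.assoc)
  also have "\<dots> = dd p s * p$(s,a)"
    unfolding dd_def by (rule suminf_mult2[symmetric, OF dd_summable[OF p]])
  finally show ?thesis .
qed

lemma occ_row_sum: "p \<in> policies \<Longrightarrow> (\<Sum>a\<in>UNIV. occ P rho \<gamma> p $ (s, a)) = dd p s"
  by (simp add: occ_eq sum_distrib_left[symmetric] policiesD)

lemma flow: "p \<in> policies \<Longrightarrow>
  dd p s' = rho s' + \<gamma> * (\<Sum>s\<in>UNIV. \<Sum>a\<in>UNIV. dd p s * p $ (s, a) * P s a s')"
proof -
  assume p: "p \<in> policies"
  have S: "\<And>s a. summable (\<lambda>t. \<gamma> ^ t * state_dist P rho p t s * (p $ (s, a) * P s a s'))"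
    by (intro summable_mult2 dd_summable[OF p])
  have S1: "\<And>s. summable (\<lambda>t. \<Sum>a\<in>UNIV. \<gamma> ^ t * state_dist P rho p t s * (p $ (s, a) * P s a s'))"
    by (intro summable_sum S)
  have S2: "summable (\<lambda>t. \<Sum>s\<in>UNIV. \<Sum>a\<in>UNIV. \<gamma> ^ t * state_dist P rho p t s * (p $ (s, a) * P s a s'))"
    by (intro summable_sum S1)
  have "(\<Sum>t. \<gamma> ^ Suc t * state_dist P rho p (Suc t) s')
     = (\<Sum>t. \<gamma> * (\<Sum>s\<in>UNIV. \<Sum>a\<in>UNIV. (\<gamma> ^ t * state_dist P rho p t s) * (p $ (s, a) * P s a s')))"
    by (simp add: sum_distrib_left mult_ac)
  also have "\<dots> = \<gamma> * (\<Sum>t. (\<Sum>s\<in>UNIV. \<Sum>a\<in>UNIV. (\<gamma> ^ t * state_dist P rho p t s) * (p $ (s, a) * P s a s')))"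
    using suminf_mult[OF S2, of \<gamma>] .
  also have "(\<Sum>t. (\<Sum>s\<in>UNIV. \<Sum>a\<in>UNIV. (\<gamma> ^ t * state_dist P rho p t s) * (p $ (s, a) * P s a s')))
      = (\<Sum>s\<in>UNIV. \<Sum>t. \<Sum>a\<in>UNIV. (\<gamma> ^ t * state_dist P rho p t s) * (p $ (s, a) * P s a s'))"
    by (rule suminf_sum) (rule S1)
  also have "\<dots> = (\<Sum>s\<in>UNIV. \<Sum>a\<in>UNIV. \<Sum>t. (\<gamma> ^ t * state_dist P rho p t s) * (p $ (s, a) * P s a s'))"
    by (intro sum.cong refl suminf_sum S)
  also have "\<dots> = (\<Sum>s\<in>UNIV. \<Sum>a\<in>UNIV. dd p s * p $ (s, a) * P s a s')"
  proof (intro sum.cong refl)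
    fix s a
    show "(\<Sum>t. (\<gamma> ^ t * state_dist P rho p t s) * (p $ (s, a) * P s a s')) = dd p s * p $ (s, a) * P s a s'"
      unfolding dd_def using suminf_mult2[OF dd_summable[OF p], of s "p $ (s, a) * P s a s'"]
      by (simp only: mult.assoc)
  qed
  finally show ?thesis using dd_split[OF p, of s'] by simp
qed

end


lemma sum_ind1: "(\<Sum>x\<in>UNIV. (if x = x0 then 1 else 0) * f x) = (f x0 :: real)"
  for f :: "'b::finite \<Rightarrow> real"
proof -
  have "(\<Sum>x\<in>UNIV. (if x = x0 then 1 else 0) * f x) = (\<Sum>x\<in>UNIV. if x0 = x then f x else 0)"
    by (rule sum.cong) auto
  then show ?thesis by (simp add: sum.delta sum.delta')
qed

lemma sum_ind2: "(\<Sum>y\<in>UNIV. f y * (if x = y then 1 else 0)) = (f x :: real)"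
  for f :: "'b::finite \<Rightarrow> real"
proof -
  have "(\<Sum>y\<in>UNIV. f y * (if x = y then 1 else 0)) = (\<Sum>y\<in>UNIV. if x = y then f y else 0)"
    by (rule sum.cong) auto
  then show ?thesis by (simp add: sum.delta sum.delta')
qed

context mdp
begin

lemma sa_Suc: "sa_dist P p x0 (Suc t) (s', a') =
   (\<Sum>x\<in>UNIV. sa_dist P p x0 t x * P (fst x) (snd x) s' * p $ (s', a'))"
  by simp

lemma sa_nonneg: "p \<in> policies \<Longrightarrow> 0 \<le> sa_dist P p x0 t x"
proof (induction t arbitrary: x)
  case 0 then show ?case by simp
next
  case (Suc t)
  obtain s' a' where x: "x = (s', a')" by fastforce
  show ?case unfolding x sa_Suc
    by (intro sum_nonneg mult_nonneg_nonneg Suc P_nonneg policiesD)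
qed

lemma sa_sum: "p \<in> policies \<Longrightarrow> (\<Sum>x\<in>UNIV. sa_dist P p x0 t x) = 1"
proof (induction t)
  case 0 then show ?case by simp
next
  case (Suc t)
  have "(\<Sum>x\<in>UNIV. sa_dist P p x0 (Suc t) x)
     = (\<Sum>s'\<in>UNIV. \<Sum>a'\<in>UNIV. \<Sum>x\<in>UNIV. sa_dist P p x0 t x * P (fst x) (snd x) s' * p $ (s', a'))"
    by (simp only: sum_UNIV_pair[of "sa_dist P p x0 (Suc t)"] sa_Suc)
  also have "\<dots> = (\<Sum>s'\<in>UNIV. \<Sum>x\<in>UNIV. \<Sum>a'\<in>UNIV. sa_dist P p x0 t x * P (fst x) (snd x) s' * p $ (s', a'))"
    by (intro sum.cong refl sum.swap)
  also have "\<dots> = (\<Sum>s'\<in>UNIV. \<Sum>x\<in>UNIV. sa_dist P p x0 t x * P (fst x) (snd x) s')"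
    using Suc.prems by (simp add: sum_distrib_left[symmetric] policiesD)
  also have "\<dots> = (\<Sum>x\<in>UNIV. \<Sum>s'\<in>UNIV. sa_dist P p x0 t x * P (fst x) (snd x) s')"
    by (rule sum.swap)
  also have "\<dots> = (\<Sum>x\<in>UNIV. sa_dist P p x0 t x)"
    by (simp add: sum_distrib_left[symmetric] P_sum)
  finally show ?case using Suc by simp
qed

lemma sa_le1: "p \<in> policies \<Longrightarrow> sa_dist P p x0 t x \<le> 1"
proof -
  assume p: "p \<in> policies"
  have "sa_dist P p x0 t x \<le> (\<Sum>x\<in>UNIV. sa_dist P p x0 t x)"
    by (rule member_le_sum) (auto intro: sa_nonneg[OF p])
  then show ?thesis using sa_sum[OF p] by simp
qed

lemma sa_back: "sa_dist P p x0 (Suc t) x =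
   (\<Sum>y\<in>UNIV. P (fst x0) (snd x0) (fst y) * p $ y * sa_dist P p y t x)"
proof (induction t arbitrary: x)
  case 0
  obtain s' a' where x: "x = (s', a')" by fastforce
  have "sa_dist P p x0 (Suc 0) x = P (fst x0) (snd x0) s' * p $ (s', a')"
    unfolding x sa_Suc using sum_ind1[of x0 "\<lambda>x. P (fst x) (snd x) s' * p $ (s', a')"]
    by (simp only: sa_dist.simps(1) mult.assoc)
  also have "\<dots> = (\<Sum>y\<in>UNIV. P (fst x0) (snd x0) (fst y) * p $ y * sa_dist P p y 0 x)"
    unfolding x using sum_ind2[of "\<lambda>y. P (fst x0) (snd x0) (fst y) * p $ y" "(s',a')"]
    by (simp only: sa_dist.simps(1) fst_conv)
  finally show ?case .
next
  case (Suc t)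
  obtain s' a' where x: "x = (s', a')" by fastforce
  have "sa_dist P p x0 (Suc (Suc t)) x
      = (\<Sum>z\<in>UNIV. (\<Sum>y\<in>UNIV. P (fst x0) (snd x0) (fst y) * p $ y * sa_dist P p y t z) * P (fst z) (snd z) s' * p $ (s', a'))"
    unfolding x sa_Suc Suc.IH ..
  also have "\<dots> = (\<Sum>z\<in>UNIV. \<Sum>y\<in>UNIV. P (fst x0) (snd x0) (fst y) * p $ y * (sa_dist P p y t z * P (fst z) (snd z) s' * p $ (s', a')))"
    by (simp add: sum_distrib_right mult.assoc)
  also have "\<dots> = (\<Sum>y\<in>UNIV. \<Sum>z\<in>UNIV. P (fst x0) (snd x0) (fst y) * p $ y * (sa_dist P p y t z * P (fst z) (snd z) s' * p $ (s', a')))"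
    by (rule sum.swap)
  also have "\<dots> = (\<Sum>y\<in>UNIV. P (fst x0) (snd x0) (fst y) * p $ y * sa_dist P p y (Suc t) x)"
    unfolding x sa_Suc by (simp add: sum_distrib_left)
  finally show ?case .
qed

definition ubound :: "real ^ ('s \<times> 'a) \<Rightarrow> real" where
  "ubound u = (\<Sum>x\<in>UNIV. \<bar>u $ x\<bar>)"

lemma sa_inner_bound: "p \<in> policies \<Longrightarrow> \<bar>\<Sum>x\<in>UNIV. sa_dist P p x0 t x * u $ x\<bar> \<le> ubound u"
proof -
  assume p: "p \<in> policies"
  have "\<bar>\<Sum>x\<in>UNIV. sa_dist P p x0 t x * u $ x\<bar> \<le> (\<Sum>x\<in>UNIV. \<bar>sa_dist P p x0 t x * u $ x\<bar>)"
    by (rule sum_abs)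
  also have "\<dots> \<le> (\<Sum>x\<in>UNIV. \<bar>u $ x\<bar>)"
  proof (intro sum_mono)
    fix x
    show "\<bar>sa_dist P p x0 t x * u $ x\<bar> \<le> \<bar>u $ x\<bar>"
      using sa_nonneg[OF p] sa_le1[OF p] by (simp add: abs_mult mult_left_le_one_le)
  qed
  finally show ?thesis unfolding ubound_def .
qed

lemma Q_summable: "p \<in> policies \<Longrightarrow>
  summable (\<lambda>t. \<gamma> ^ t * (\<Sum>x\<in>UNIV. sa_dist P p x0 t x * u $ x))"
proof (rule summable_comparison_test'[where g="\<lambda>t. ubound u * \<gamma> ^ t"])
  show "summable (\<lambda>t. ubound u * \<gamma> ^ t)" using g0 g1 by (intro summable_mult summable_geometric) simp
  fix t assume p: "p \<in> policies"
  have "\<gamma> ^ t * \<bar>\<Sum>x\<in>UNIV. sa_dist P p x0 t x * u $ x\<bar> \<le> \<gamma> ^ t * ubound u"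
    by (intro mult_left_mono sa_inner_bound[OF p] zero_le_power g0)
  then show "norm (\<gamma> ^ t * (\<Sum>x\<in>UNIV. sa_dist P p x0 t x * u $ x)) \<le> ubound u * \<gamma> ^ t"
    using g0 by (simp only: real_norm_def abs_mult power_abs abs_of_nonneg mult.commute)
qed

lemma Q_eq: "Qfun P \<gamma> p u $ x0 = (\<Sum>t. \<gamma> ^ t * (\<Sum>x\<in>UNIV. sa_dist P p x0 t x * u $ x))"
  by (simp add: Qfun_def)

lemma bellman_y: "p \<in> policies \<Longrightarrow>
  Qfun P \<gamma> p u $ x0 = u $ x0 + \<gamma> * (\<Sum>y\<in>UNIV. P (fst x0) (snd x0) (fst y) * p $ y * Qfun P \<gamma> p u $ y)"
proof -
  assume p: "p \<in> policies"
  define c where "c y = P (fst x0) (snd x0) (fst y) * p $ y" for y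
  have S: "\<And>y. summable (\<lambda>t. c y * (\<gamma> ^ t * (\<Sum>x\<in>UNIV. sa_dist P p y t x * u $ x)))"
    by (intro summable_mult Q_summable[OF p])
  have S1: "summable (\<lambda>t. \<Sum>y\<in>UNIV. c y * (\<gamma> ^ t * (\<Sum>x\<in>UNIV. sa_dist P p y t x * u $ x)))"
    by (intro summable_sum S)
  have head: "\<gamma> ^ 0 * (\<Sum>x\<in>UNIV. sa_dist P p x0 0 x * u $ x) = u $ x0"
    using sum_ind1[of x0 "\<lambda>x. u $ x"] by simp
  have "\<And>t. \<gamma> ^ Suc t * (\<Sum>x\<in>UNIV. sa_dist P p x0 (Suc t) x * u $ x)
      = \<gamma> * (\<Sum>y\<in>UNIV. c y * (\<gamma> ^ t * (\<Sum>x\<in>UNIV. sa_dist P p y t x * u $ x)))"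
  proof -
    fix t
    have "(\<Sum>x\<in>UNIV. sa_dist P p x0 (Suc t) x * u $ x)
        = (\<Sum>x\<in>UNIV. \<Sum>y\<in>UNIV. c y * (sa_dist P p y t x * u $ x))"
      unfolding sa_back c_def by (simp add: sum_distrib_right mult.assoc)
    also have "\<dots> = (\<Sum>y\<in>UNIV. \<Sum>x\<in>UNIV. c y * (sa_dist P p y t x * u $ x))"
      by (rule sum.swap)
    also have "\<dots> = (\<Sum>y\<in>UNIV. c y * (\<Sum>x\<in>UNIV. sa_dist P p y t x * u $ x))"
      by (simp add: sum_distrib_left)
    finally show "\<gamma> ^ Suc t * (\<Sum>x\<in>UNIV. sa_dist P p x0 (Suc t) x * u $ x)
      = \<gamma> * (\<Sum>y\<in>UNIV. c y * (\<gamma> ^ t * (\<Sum>x\<in>UNIV. sa_dist P p y t x * u $ x)))"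
      by (simp add: sum_distrib_left mult_ac)
  qed
  then have "(\<Sum>t. \<gamma> ^ Suc t * (\<Sum>x\<in>UNIV. sa_dist P p x0 (Suc t) x * u $ x))
      = (\<Sum>t. \<gamma> * (\<Sum>y\<in>UNIV. c y * (\<gamma> ^ t * (\<Sum>x\<in>UNIV. sa_dist P p y t x * u $ x))))"
    by presburger
  also have "\<dots> = \<gamma> * (\<Sum>t. (\<Sum>y\<in>UNIV. c y * (\<gamma> ^ t * (\<Sum>x\<in>UNIV. sa_dist P p y t x * u $ x))))"
    using suminf_mult[OF S1, of \<gamma>] .
  also have "(\<Sum>t. (\<Sum>y\<in>UNIV. c y * (\<gamma> ^ t * (\<Sum>x\<in>UNIV. sa_dist P p y t x * u $ x))))
      = (\<Sum>y\<in>UNIV. \<Sum>t. c y * (\<gamma> ^ t * (\<Sum>x\<in>UNIV. sa_dist P p y t x * u $ x)))"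
    by (rule suminf_sum) (rule S)
  also have "\<dots> = (\<Sum>y\<in>UNIV. c y * Qfun P \<gamma> p u $ y)"
    unfolding Q_eq by (intro sum.cong refl suminf_mult Q_summable[OF p])
  finally have tail: "(\<Sum>t. \<gamma> ^ Suc t * (\<Sum>x\<in>UNIV. sa_dist P p x0 (Suc t) x * u $ x))
      = \<gamma> * (\<Sum>y\<in>UNIV. c y * Qfun P \<gamma> p u $ y)" .
  have "Qfun P \<gamma> p u $ x0 = (\<Sum>t. \<gamma> ^ Suc t * (\<Sum>x\<in>UNIV. sa_dist P p x0 (Suc t) x * u $ x))
      + \<gamma> ^ 0 * (\<Sum>x\<in>UNIV. sa_dist P p x0 0 x * u $ x)"
    unfolding Q_eq using suminf_split_head[OF Q_summable[OF p, of x0 u]] by simp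
  then show ?thesis using tail head unfolding c_def by simp
qed

definition Vf where "Vf p u s = (\<Sum>a\<in>UNIV. p $ (s, a) * Qfun P \<gamma> p u $ (s, a))"

lemma bellman: "p \<in> policies \<Longrightarrow>
  Qfun P \<gamma> p u $ (s, a) = u $ (s, a) + \<gamma> * (\<Sum>s'\<in>UNIV. P s a s' * Vf p u s')"
proof -
  assume p: "p \<in> policies"
  have "(\<Sum>y\<in>UNIV. P s a (fst y) * p $ y * Qfun P \<gamma> p u $ y)
     = (\<Sum>s'\<in>UNIV. \<Sum>a'\<in>UNIV. P s a s' * p $ (s', a') * Qfun P \<gamma> p u $ (s', a'))"
    using sum_UNIV_pair[of "\<lambda>y. P s a (fst y) * p $ y * Qfun P \<gamma> p u $ y"] by simp
  also have "\<dots> = (\<Sum>s'\<in>UNIV. P s a s' * Vf p u s')"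
    unfolding Vf_def by (simp add: sum_distrib_left mult_ac)
  finally show ?thesis using bellman_y[OF p, of u "(s,a)"] by simp
qed

end


lemma swap3: "(\<Sum>s\<in>UNIV. \<Sum>a\<in>UNIV. \<Sum>s'\<in>UNIV. f s a s') = (\<Sum>s'\<in>UNIV. \<Sum>s\<in>UNIV. \<Sum>a\<in>UNIV. f s a s')"
  for f :: "'s::finite \<Rightarrow> 'a::finite \<Rightarrow> 's \<Rightarrow> real"
proof -
  have "(\<Sum>s\<in>UNIV. \<Sum>a\<in>UNIV. \<Sum>s'\<in>UNIV. f s a s') = (\<Sum>s\<in>UNIV. \<Sum>s'\<in>UNIV. \<Sum>a\<in>UNIV. f s a s')"
    by (intro sum.cong refl sum.swap)
  also have "\<dots> = (\<Sum>s'\<in>UNIV. \<Sum>s\<in>UNIV. \<Sum>a\<in>UNIV. f s a s')"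
    by (rule sum.swap)
  finally show ?thesis .
qed

context mdp
begin

lemma flow_gamma: "p \<in> policies \<Longrightarrow>
  \<gamma> * (\<Sum>s\<in>UNIV. \<Sum>a\<in>UNIV. dd p s * p $ (s, a) * P s a s') = dd p s' - rho s'"
  using flow[of p s'] by simp

lemma pdl_aux:
  assumes p: "p \<in> policies" and q: "q \<in> policies"
  shows "(\<Sum>x\<in>UNIV. u $ x * occ P rho \<gamma> p $ x)
     = (\<Sum>s\<in>UNIV. dd p s * (\<Sum>a\<in>UNIV. (p $ (s,a) - q $ (s,a)) * Qfun P \<gamma> q u $ (s,a)))
       + (\<Sum>s\<in>UNIV. rho s * Vf q u s)"
proof -
  define Q where "Q s a = Qfun P \<gamma> q u $ (s,a)" for s a
  define V where "V = Vf q u"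
  have QB: "\<And>s a. Q s a = u $ (s, a) + \<gamma> * (\<Sum>s'\<in>UNIV. P s a s' * V s')"
    unfolding Q_def V_def by (rule bellman[OF q])
  have VQ: "\<And>s. V s = (\<Sum>a\<in>UNIV. q $ (s,a) * Q s a)"
    unfolding Q_def V_def Vf_def ..
  have "(\<Sum>s\<in>UNIV. dd p s * (\<Sum>a\<in>UNIV. p $ (s,a) * Q s a))
      = (\<Sum>s\<in>UNIV. \<Sum>a\<in>UNIV. dd p s * p $ (s,a) * u $ (s, a) + dd p s * p $ (s,a) * (\<gamma> * (\<Sum>s'\<in>UNIV. P s a s' * V s')))"
    unfolding QB by (simp add: sum_distrib_left distrib_left mult.assoc)
  also have "\<dots> = (\<Sum>s\<in>UNIV. \<Sum>a\<in>UNIV. dd p s * p $ (s,a) * u $ (s, a))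
      + (\<Sum>s\<in>UNIV. \<Sum>a\<in>UNIV. dd p s * p $ (s,a) * (\<gamma> * (\<Sum>s'\<in>UNIV. P s a s' * V s')))"
    by (simp add: sum.distrib)
  also have "(\<Sum>s\<in>UNIV. \<Sum>a\<in>UNIV. dd p s * p $ (s,a) * u $ (s, a)) = (\<Sum>x\<in>UNIV. u $ x * occ P rho \<gamma> p $ x)"
    using sum_UNIV_pair[of "\<lambda>x. u $ x * occ P rho \<gamma> p $ x"] by (simp add: occ_eq[OF p] mult_ac)
  also have "(\<Sum>s\<in>UNIV. \<Sum>a\<in>UNIV. dd p s * p $ (s,a) * (\<gamma> * (\<Sum>s'\<in>UNIV. P s a s' * V s')))
      = (\<Sum>s\<in>UNIV. \<Sum>a\<in>UNIV. \<Sum>s'\<in>UNIV. \<gamma> * (dd p s * p $ (s,a) * P s a s') * V s')"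
    by (simp add: sum_distrib_left mult_ac)
  also have "\<dots> = (\<Sum>s'\<in>UNIV. \<Sum>s\<in>UNIV. \<Sum>a\<in>UNIV. \<gamma> * (dd p s * p $ (s,a) * P s a s') * V s')"
    by (rule swap3)
  also have "\<dots> = (\<Sum>s'\<in>UNIV. (\<gamma> * (\<Sum>s\<in>UNIV. \<Sum>a\<in>UNIV. dd p s * p $ (s,a) * P s a s')) * V s')"
    by (simp add: sum_distrib_left sum_distrib_right)
  also have "\<dots> = (\<Sum>s'\<in>UNIV. (dd p s' - rho s') * V s')"
    by (simp add: flow_gamma[OF p])
  finally have main: "(\<Sum>s\<in>UNIV. dd p s * (\<Sum>a\<in>UNIV. p $ (s,a) * Q s a))
      = (\<Sum>x\<in>UNIV. u $ x * occ P rho \<gamma> p $ x) + (\<Sum>s'\<in>UNIV. (dd p s' - rho s') * V s')" .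
  have "(\<Sum>s\<in>UNIV. dd p s * (\<Sum>a\<in>UNIV. (p $ (s,a) - q $ (s,a)) * Q s a))
      = (\<Sum>s\<in>UNIV. dd p s * (\<Sum>a\<in>UNIV. p $ (s,a) * Q s a)) - (\<Sum>s\<in>UNIV. dd p s * V s)"
    by (simp add: VQ left_diff_distrib sum_subtractf right_diff_distrib)
  also have "\<dots> = (\<Sum>x\<in>UNIV. u $ x * occ P rho \<gamma> p $ x) - (\<Sum>s\<in>UNIV. rho s * V s)"
    unfolding main by (simp add: left_diff_distrib sum_subtractf)
  finally show ?thesis unfolding Q_def V_def by simp
qed

lemma pdl:
  assumes p: "p \<in> policies" and q: "q \<in> policies"
  shows "(\<Sum>x\<in>UNIV. u $ x * occ P rho \<gamma> p $ x) - (\<Sum>x\<in>UNIV. u $ x * occ P rho \<gamma> q $ x)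
     = (\<Sum>s\<in>UNIV. dd p s * (\<Sum>a\<in>UNIV. (p $ (s,a) - q $ (s,a)) * Qfun P \<gamma> q u $ (s,a)))"
  using pdl_aux[OF p q, of u] pdl_aux[OF q q, of u] by simp

lemma dd_lip:
  assumes p: "p \<in> policies" and q: "q \<in> policies"
    and B: "\<And>s. (\<Sum>a\<in>UNIV. \<bar>p $ (s,a) - q $ (s,a)\<bar>) \<le> B"
  shows "(\<Sum>s\<in>UNIV. \<bar>dd p s - dd q s\<bar>) \<le> \<gamma> * B / (1 - \<gamma>)\<^sup>2"
proof -
  define e where "e s = dd p s - dd q s" for s
  define c where "c s a = dd p s * p $ (s,a) - dd q s * q $ (s,a)" for s a
  have e_eq: "e s' = \<gamma> * (\<Sum>s\<in>UNIV. \<Sum>a\<in>UNIV. c s a * P s a s')" for s'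
    unfolding e_def c_def using flow_gamma[OF p, of s'] flow_gamma[OF q, of s']
    by (simp add: left_diff_distrib sum_subtractf right_diff_distrib)
  have e_abs: "\<bar>e s'\<bar> \<le> \<gamma> * (\<Sum>s\<in>UNIV. \<Sum>a\<in>UNIV. \<bar>c s a\<bar> * P s a s')" for s'
  proof -
    have "\<bar>\<Sum>s\<in>UNIV. \<Sum>a\<in>UNIV. c s a * P s a s'\<bar> \<le> (\<Sum>s\<in>UNIV. \<bar>\<Sum>a\<in>UNIV. c s a * P s a s'\<bar>)"
      by (rule sum_abs)
    also have "\<dots> \<le> (\<Sum>s\<in>UNIV. \<Sum>a\<in>UNIV. \<bar>c s a * P s a s'\<bar>)"
      by (intro sum_mono sum_abs)
    also have "\<dots> = (\<Sum>s\<in>UNIV. \<Sum>a\<in>UNIV. \<bar>c s a\<bar> * P s a s')"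
      by (simp add: abs_mult P_nonneg)
    finally show ?thesis unfolding e_eq using g0 by (simp add: abs_mult mult_left_mono)
  qed
  have "(\<Sum>s'\<in>UNIV. \<bar>e s'\<bar>) \<le> (\<Sum>s'\<in>UNIV. \<gamma> * (\<Sum>s\<in>UNIV. \<Sum>a\<in>UNIV. \<bar>c s a\<bar> * P s a s'))"
    by (intro sum_mono e_abs)
  also have "\<dots> = \<gamma> * (\<Sum>s'\<in>UNIV. \<Sum>s\<in>UNIV. \<Sum>a\<in>UNIV. \<bar>c s a\<bar> * P s a s')"
    by (simp add: sum_distrib_left)
  also have "(\<Sum>s'\<in>UNIV. \<Sum>s\<in>UNIV. \<Sum>a\<in>UNIV. \<bar>c s a\<bar> * P s a s') = (\<Sum>s\<in>UNIV. \<Sum>a\<in>UNIV. \<Sum>s'\<in>UNIV. \<bar>c s a\<bar> * P s a s')"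
    by (rule swap3[symmetric])
  also have "\<dots> = (\<Sum>s\<in>UNIV. \<Sum>a\<in>UNIV. \<bar>c s a\<bar>)"
    by (simp add: sum_distrib_left[symmetric] P_sum)
  also have "(\<Sum>s\<in>UNIV. \<Sum>a\<in>UNIV. \<bar>c s a\<bar>) \<le> (\<Sum>s\<in>UNIV. \<bar>e s\<bar> + dd q s * B)"
  proof (intro sum_mono)
    fix s
    have "\<bar>c s a\<bar> \<le> \<bar>e s\<bar> * p $ (s,a) + dd q s * \<bar>p $ (s,a) - q $ (s,a)\<bar>" for a
    proof -
      have "c s a = e s * p $ (s,a) + dd q s * (p $ (s,a) - q $ (s,a))"
        unfolding c_def e_def by (simp add: algebra_simps)
      then have "\<bar>c s a\<bar> \<le> \<bar>e s * p $ (s,a)\<bar> + \<bar>dd q s * (p $ (s,a) - q $ (s,a))\<bar>"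
        by (simp add: abs_triangle_ineq)
      then show ?thesis using policiesD(1)[OF p, of s a] dd_nonneg[OF q, of s]
        by (simp add: abs_mult)
    qed
    then have "(\<Sum>a\<in>UNIV. \<bar>c s a\<bar>) \<le> (\<Sum>a\<in>UNIV. \<bar>e s\<bar> * p $ (s,a) + dd q s * \<bar>p $ (s,a) - q $ (s,a)\<bar>)"
      by (intro sum_mono)
    also have "\<dots> = \<bar>e s\<bar> * (\<Sum>a\<in>UNIV. p $ (s,a)) + dd q s * (\<Sum>a\<in>UNIV. \<bar>p $ (s,a) - q $ (s,a)\<bar>)"
      by (simp add: sum.distrib sum_distrib_left)
    also have "\<dots> \<le> \<bar>e s\<bar> + dd q s * B"
      using policiesD(2)[OF p, of s] mult_left_mono[OF B dd_nonneg[OF q, of s]] by simp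
    finally show "(\<Sum>a\<in>UNIV. \<bar>c s a\<bar>) \<le> \<bar>e s\<bar> + dd q s * B" .
  qed
  also have "(\<Sum>s\<in>UNIV. \<bar>e s\<bar> + dd q s * B) = (\<Sum>s\<in>UNIV. \<bar>e s\<bar>) + B / (1 - \<gamma>)"
    by (simp add: sum.distrib sum_distrib_right[symmetric] dd_sum[OF q])
  finally have "(\<Sum>s'\<in>UNIV. \<bar>e s'\<bar>) \<le> \<gamma> * ((\<Sum>s\<in>UNIV. \<bar>e s\<bar>) + B / (1 - \<gamma>))"
    using g0 by (simp add: mult_left_mono)
  then have "(1 - \<gamma>) * (\<Sum>s\<in>UNIV. \<bar>e s\<bar>) \<le> \<gamma> * B / (1 - \<gamma>)"
    by (simp add: algebra_simps)
  then have "(\<Sum>s\<in>UNIV. \<bar>e s\<bar>) \<le> \<gamma> * B / (1 - \<gamma>) / (1 - \<gamma>)"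
    using g1 by (simp add: pos_le_divide_eq mult_ac)
  then show ?thesis unfolding e_def by (simp add: power2_eq_square)
qed

end


lemma grad_rep:
  assumes "F differentiable (at mu)"
  shows "frechet_derivative F (at mu) v = (\<Sum>x\<in>UNIV. grad F mu $ x * v $ x)"
proof -
  have lin: "linear (frechet_derivative F (at mu))" by (rule linear_frechet_derivative[OF assms])
  have "v = (\<Sum>x\<in>UNIV. (v$x) *\<^sub>R axis x 1)" using basis_expansion[of v] by (simp add: scalar_mult_eq_scaleR)
  then have "frechet_derivative F (at mu) v = frechet_derivative F (at mu) (\<Sum>x\<in>UNIV. (v$x) *\<^sub>R axis x 1)"
    by simp
  also have "\<dots> = (\<Sum>x\<in>UNIV. frechet_derivative F (at mu) ((v$x) *\<^sub>R axis x 1))"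
    by (rule linear_sum[OF lin])
  also have "\<dots> = (\<Sum>x\<in>UNIV. v$x * frechet_derivative F (at mu) (axis x 1))"
    by (simp add: linear_scale[OF lin])
  finally show ?thesis by (simp add: grad_def mult.commute)
qed

lemma norm_sq_pair: "(norm v)\<^sup>2 = (\<Sum>s\<in>UNIV. \<Sum>a\<in>UNIV. (v $ (s,a))\<^sup>2)"
  for v :: "real ^ ('s::finite \<times> 'a::finite)"
proof -
  have "(norm v)\<^sup>2 = (\<Sum>x\<in>UNIV. (v $ x)\<^sup>2)"
    unfolding power2_norm_eq_inner inner_vec_def by (simp add: power2_eq_square)
  then show ?thesis using sum_UNIV_pair[of "\<lambda>x. (v $ x)\<^sup>2"] by simp
qed

lemma comb_comp: "(p + t *\<^sub>R (q - p)) $ x = p $ x + t * (q $ x - p $ x)"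
  for p q :: "real ^ 'n"
  by simp

lemma policies_comb:
  assumes p: "p \<in> policies" and q: "q \<in> policies" and t: "0 \<le> t" "t \<le> 1"
  shows "p + t *\<^sub>R (q - p) \<in> policies"
proof -
  have "\<forall>s. (\<chi> a. (p + t *\<^sub>R (q - p)) $ (s, a)) \<in> prob_simplex"
  proof
    fix s
    have nn: "0 \<le> (p + t *\<^sub>R (q - p)) $ (s, a)" for a
    proof -
      have "(p + t *\<^sub>R (q - p)) $ (s, a) = (1 - t) * p $ (s,a) + t * q $ (s,a)"
        unfolding comb_comp by (simp add: algebra_simps)
      then show ?thesis using t policiesD(1)[OF p, of s a] policiesD(1)[OF q, of s a] by simp
    qed
    have "(\<Sum>a\<in>UNIV. (p + t *\<^sub>R (q - p)) $ (s, a)) = (\<Sum>a\<in>UNIV. p $ (s,a)) + t * ((\<Sum>a\<in>UNIV. q $ (s,a)) - (\<Sum>a\<in>UNIV. p $ (s,a)))"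
      unfolding comb_comp by (simp only: sum.distrib sum_distrib_left[symmetric] sum_subtractf)
    also have "\<dots> = 1" using policiesD(2)[OF p] policiesD(2)[OF q] by simp
    finally show "(\<chi> a. (p + t *\<^sub>R (q - p)) $ (s, a)) \<in> prob_simplex"
      unfolding prob_simplex_def using nn by simp
  qed
  then show ?thesis unfolding policies_def by simp
qed

lemma row_abs_le2:
  assumes p: "p \<in> policies" and q: "q \<in> policies"
  shows "(\<Sum>a\<in>UNIV. \<bar>p $ (s,a) - q $ (s,a)\<bar>) \<le> 2"
proof -
  have "(\<Sum>a\<in>UNIV. \<bar>p $ (s,a) - q $ (s,a)\<bar>) \<le> (\<Sum>a\<in>UNIV. p $ (s,a) + q $ (s,a))"
  proof (intro sum_mono)
    fix a show "\<bar>p $ (s,a) - q $ (s,a)\<bar> \<le> p $ (s,a) + q $ (s,a)"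
      using policiesD(1)[OF p, of s a] policiesD(1)[OF q, of s a] by (simp add: abs_le_iff)
  qed
  also have "\<dots> = 2" using policiesD(2)[OF p] policiesD(2)[OF q] by (simp add: sum.distrib)
  finally show ?thesis .
qed

lemma row_sq_le2:
  assumes p: "p \<in> policies" and q: "q \<in> policies"
  shows "(\<Sum>a\<in>UNIV. (p $ (s,a) - q $ (s,a))\<^sup>2) \<le> 2"
proof -
  have "(p $ (s,a) - q $ (s,a))\<^sup>2 \<le> p $ (s,a) + q $ (s,a)" for a
  proof -
    have h: "0 \<le> p $ (s,a)" "p $ (s,a) \<le> 1" "0 \<le> q $ (s,a)" "q $ (s,a) \<le> 1"
      using policiesD(1)[OF p] policiesD(1)[OF q] policies_le1[OF p] policies_le1[OF q] by auto
    define d where "d = p $ (s,a) - q $ (s,a)"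
    have a1: "\<bar>d\<bar> \<le> 1" unfolding abs_le_iff d_def using h by linarith
    have "d\<^sup>2 = \<bar>d\<bar> * \<bar>d\<bar>" by (simp add: power2_eq_square)
    also have "\<dots> \<le> \<bar>d\<bar> * 1" by (intro mult_left_mono a1) simp
    also have "\<dots> \<le> p $ (s,a) + q $ (s,a)" unfolding d_def using h by (simp add: abs_le_iff)
    finally show ?thesis unfolding d_def .
  qed
  then have "(\<Sum>a\<in>UNIV. (p $ (s,a) - q $ (s,a))\<^sup>2) \<le> (\<Sum>a\<in>UNIV. p $ (s,a) + q $ (s,a))"
    by (intro sum_mono)
  also have "\<dots> = 2" using policiesD(2)[OF p] policiesD(2)[OF q] by (simp add: sum.distrib)
  finally show ?thesis .
qed

lemma le_of_small:
  fixes x A B \<delta> :: real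
  assumes "\<delta> > 0" "A \<ge> 0" "\<And>t. 0 < t \<Longrightarrow> t < \<delta> \<Longrightarrow> x \<le> A * t + B"
  shows "x \<le> B"
proof (rule ccontr)
  assume "\<not> x \<le> B"
  define t where "t = min (\<delta>/2) ((x - B) / (2 * (A + 1)))"
  have t0: "0 < t" "t < \<delta>" using assms \<open>\<not> x \<le> B\<close> by (auto simp: t_def)
  have "t \<le> (x - B) / (2 * (A + 1))" by (simp add: t_def)
  then have "A * t \<le> A * ((x - B) / (2 * (A + 1)))" using assms(2) by (rule mult_left_mono)
  also have "\<dots> < x - B"
  proof -
    have "A * ((x - B) / (2 * (A + 1))) = (x - B) * (A / (2 * (A + 1)))" by simp
    also have "\<dots> < (x - B) * 1"
      using \<open>\<not> x \<le> B\<close> assms(2) by (intro mult_strict_left_mono) (auto simp: field_simps)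
    finally show ?thesis by simp
  qed
  finally show False using assms(3)[OF t0] by simp
qed

lemma le_of_eps:
  fixes x C :: real
  assumes "C \<ge> 0" "\<And>e. e > 0 \<Longrightarrow> x \<le> e * C"
  shows "x \<le> 0"
proof (rule ccontr)
  assume "\<not> x \<le> 0"
  then have "x \<le> (x / (2 * (C + 1))) * C" using assms(2)[of "x / (2 * (C + 1))"] assms(1) by simp
  also have "\<dots> = x * (C / (2 * (C + 1)))" by simp
  also have "\<dots> < x * 1" using \<open>\<not> x \<le> 0\<close> assms(1) by (intro mult_strict_left_mono) (auto simp: field_simps)
  finally show False by simp
qed



context mdp
begin

lemma occ_diff_bound:
  assumes p: "p \<in> policies" and q: "q \<in> policies"
    and B: "\<And>s. (\<Sum>a\<in>UNIV. \<bar>p $ (s,a) - q $ (s,a)\<bar>) \<le> B"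
  shows "norm (occ P rho \<gamma> p - occ P rho \<gamma> q) \<le> \<gamma> * B / (1 - \<gamma>)\<^sup>2 + B / (1 - \<gamma>)"
proof -
  have "norm (occ P rho \<gamma> p - occ P rho \<gamma> q) \<le> (\<Sum>x\<in>UNIV. \<bar>(occ P rho \<gamma> p - occ P rho \<gamma> q) $ x\<bar>)"
    by (rule norm_le_l1_cart)
  also have "\<dots> = (\<Sum>s\<in>UNIV. \<Sum>a\<in>UNIV. \<bar>dd p s * p $ (s,a) - dd q s * q $ (s,a)\<bar>)"
    using sum_UNIV_pair[of "\<lambda>x. \<bar>(occ P rho \<gamma> p - occ P rho \<gamma> q) $ x\<bar>"]
    by (simp add: occ_eq[OF p] occ_eq[OF q])
  also have "\<dots> \<le> (\<Sum>s\<in>UNIV. \<Sum>a\<in>UNIV. \<bar>dd p s - dd q s\<bar> * p $ (s,a) + dd q s * \<bar>p $ (s,a) - q $ (s,a)\<bar>)"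
  proof (intro sum_mono)
    fix s a
    have "dd p s * p $ (s,a) - dd q s * q $ (s,a) = (dd p s - dd q s) * p $ (s,a) + dd q s * (p $ (s,a) - q $ (s,a))"
      by (simp add: algebra_simps)
    then have "\<bar>dd p s * p $ (s,a) - dd q s * q $ (s,a)\<bar> \<le> \<bar>(dd p s - dd q s) * p $ (s,a)\<bar> + \<bar>dd q s * (p $ (s,a) - q $ (s,a))\<bar>"
      by (simp add: abs_triangle_ineq)
    then show "\<bar>dd p s * p $ (s,a) - dd q s * q $ (s,a)\<bar> \<le> \<bar>dd p s - dd q s\<bar> * p $ (s,a) + dd q s * \<bar>p $ (s,a) - q $ (s,a)\<bar>"
      using policiesD(1)[OF p, of s a] dd_nonneg[OF q, of s] by (simp add: abs_mult)
  qed
  also have "\<dots> = (\<Sum>s\<in>UNIV. \<bar>dd p s - dd q s\<bar>) + (\<Sum>s\<in>UNIV. dd q s * (\<Sum>a\<in>UNIV. \<bar>p $ (s,a) - q $ (s,a)\<bar>))"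
    by (simp add: sum.distrib sum_distrib_left[symmetric] policiesD(2)[OF p])
  also have "\<dots> \<le> \<gamma> * B / (1 - \<gamma>)\<^sup>2 + (\<Sum>s\<in>UNIV. dd q s * B)"
    by (intro add_mono dd_lip[OF p q B] sum_mono mult_left_mono B dd_nonneg[OF q])
  also have "(\<Sum>s\<in>UNIV. dd q s * B) = B / (1 - \<gamma>)"
    by (simp add: sum_distrib_right[symmetric] dd_sum[OF q])
  finally show ?thesis .
qed

lemma deriv_ident:
  fixes F :: "real ^ ('s \<times> 'a) \<Rightarrow> real" and D :: "real ^ ('s \<times> 'a) \<Rightarrow> real"
  assumes p': "p' \<in> policies" and q: "q \<in> policies"
    and diff: "F differentiable (at (occ P rho \<gamma> p'))"
    and lin: "linear D" and L: "0 \<le> L"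
    and sm: "\<forall>p\<in>policies. \<bar>F (occ P rho \<gamma> p) - F (occ P rho \<gamma> p') - D (p - p')\<bar> \<le> L / 2 * (norm (p - p'))\<^sup>2"
  shows "D (q - p') = (\<Sum>s\<in>UNIV. dd p' s * (\<Sum>a\<in>UNIV. (q $ (s,a) - p' $ (s,a)) * Qfun P \<gamma> p' (grad F (occ P rho \<gamma> p')) $ (s,a)))"
proof -
  define h where "h = q - p'"
  define pt where "pt t = p' + t *\<^sub>R h" for t
  define \<Gamma> where "\<Gamma> = grad F (occ P rho \<gamma> p')"
  define Q where "Q = Qfun P \<gamma> p' \<Gamma>"
  define T where "T t = (\<Sum>s\<in>UNIV. dd (pt t) s * (\<Sum>a\<in>UNIV. h $ (s,a) * Q $ (s,a)))" for t
  define F' where "F' = frechet_derivative F (at (occ P rho \<gamma> p'))"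
  define mu' where "mu' = occ P rho \<gamma> p'"
  define Hq where "Hq = (\<Sum>s\<in>UNIV. \<bar>\<Sum>a\<in>UNIV. h $ (s,a) * Q $ (s,a)\<bar>)"
  define C1 where "C1 = Hq * (\<gamma> * 2 / (1 - \<gamma>)\<^sup>2)"
  define C2 where "C2 = \<gamma> * 2 / (1 - \<gamma>)\<^sup>2 + 2 / (1 - \<gamma>)"
  have g1': "0 < 1 - \<gamma>" using g1 by simp
  have C2pos: "0 < C2" unfolding C2_def using g0 g1' by (intro add_nonneg_pos) auto
  have Hq0: "0 \<le> Hq" unfolding Hq_def by (intro sum_nonneg) simp
  have C10: "0 \<le> C1" unfolding C1_def using Hq0 g0 g1' by simp
  have pt_pol: "pt t \<in> policies" if "0 \<le> t" "t \<le> 1" for t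
    unfolding pt_def h_def by (rule policies_comb[OF p' q that])
  have pt0: "pt 0 = p'" by (simp add: pt_def)
  have ptd: "pt t - p' = t *\<^sub>R h" for t by (simp add: pt_def)
  have rowdiff: "(\<Sum>a\<in>UNIV. \<bar>pt t $ (s,a) - p' $ (s,a)\<bar>) \<le> 2 * t" if "0 \<le> t" "t \<le> 1" for t s
  proof -
    have "(\<Sum>a\<in>UNIV. \<bar>pt t $ (s,a) - p' $ (s,a)\<bar>) = t * (\<Sum>a\<in>UNIV. \<bar>q $ (s,a) - p' $ (s,a)\<bar>)"
      unfolding pt_def h_def using that by (simp add: abs_mult sum_distrib_left)
    also have "\<dots> \<le> t * 2" by (intro mult_left_mono row_abs_le2[OF q p'] that)
    finally show ?thesis by simp
  qed
  have Tdiff: "\<bar>T t - T 0\<bar> \<le> C1 * t" if "0 \<le> t" "t \<le> 1" for t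
  proof -
    have "T t - T 0 = (\<Sum>s\<in>UNIV. (dd (pt t) s - dd p' s) * (\<Sum>a\<in>UNIV. h $ (s,a) * Q $ (s,a)))"
      unfolding T_def pt0 by (simp add: sum_subtractf left_diff_distrib)
    then have "\<bar>T t - T 0\<bar> \<le> (\<Sum>s\<in>UNIV. \<bar>dd (pt t) s - dd p' s\<bar> * \<bar>\<Sum>a\<in>UNIV. h $ (s,a) * Q $ (s,a)\<bar>)"
      by (simp add: abs_mult[symmetric] sum_abs)
    also have "\<dots> \<le> (\<Sum>s\<in>UNIV. \<bar>dd (pt t) s - dd p' s\<bar> * Hq)"
    proof (intro sum_mono mult_left_mono)
      fix s
      show "\<bar>\<Sum>a\<in>UNIV. h $ (s,a) * Q $ (s,a)\<bar> \<le> Hq"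
        unfolding Hq_def by (rule member_le_sum[where f="\<lambda>s. \<bar>\<Sum>a\<in>UNIV. h $ (s,a) * Q $ (s,a)\<bar>"]) auto
    qed simp
    also have "\<dots> = (\<Sum>s\<in>UNIV. \<bar>dd (pt t) s - dd p' s\<bar>) * Hq"
      by (simp add: sum_distrib_right)
    also have "\<dots> \<le> (\<gamma> * (2 * t) / (1 - \<gamma>)\<^sup>2) * Hq"
      by (intro mult_right_mono dd_lip[OF pt_pol[OF that] p'] rowdiff[OF that] Hq0)
    also have "\<dots> = C1 * t" unfolding C1_def by simp
    finally show ?thesis .
  qed
  have mudiff: "norm (occ P rho \<gamma> (pt t) - mu') \<le> C2 * t" if "0 \<le> t" "t \<le> 1" for t
  proof -
    have "norm (occ P rho \<gamma> (pt t) - mu') \<le> \<gamma> * (2 * t) / (1 - \<gamma>)\<^sup>2 + (2 * t) / (1 - \<gamma>)"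
      unfolding mu'_def by (rule occ_diff_bound[OF pt_pol[OF that] p' rowdiff[OF that]])
    also have "\<dots> = C2 * t" unfolding C2_def by (simp add: algebra_simps)
    finally show ?thesis .
  qed
  have pdl_t: "(\<Sum>x\<in>UNIV. \<Gamma> $ x * (occ P rho \<gamma> (pt t) - mu') $ x) = t * T t" if "0 \<le> t" "t \<le> 1" for t
  proof -
    have "(\<Sum>x\<in>UNIV. \<Gamma> $ x * (occ P rho \<gamma> (pt t) - mu') $ x)
        = (\<Sum>x\<in>UNIV. \<Gamma> $ x * occ P rho \<gamma> (pt t) $ x) - (\<Sum>x\<in>UNIV. \<Gamma> $ x * occ P rho \<gamma> p' $ x)"
      unfolding mu'_def by (simp add: right_diff_distrib sum_subtractf)
    also have "\<dots> = (\<Sum>s\<in>UNIV. dd (pt t) s * (\<Sum>a\<in>UNIV. (pt t $ (s,a) - p' $ (s,a)) * Q $ (s,a)))"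
      unfolding Q_def by (rule pdl[OF pt_pol[OF that] p'])
    also have "\<dots> = t * T t"
      unfolding T_def pt_def by (simp add: sum_distrib_left mult_ac)
    finally show ?thesis .
  qed
  have F'rep: "F' v = (\<Sum>x\<in>UNIV. \<Gamma> $ x * v $ x)" for v
    unfolding F'_def \<Gamma>_def by (rule grad_rep[OF diff])
  have hasder: "(F has_derivative F') (at mu')"
    unfolding F'_def mu'_def using diff frechet_derivative_works by blast
  then have eps: "\<forall>e>0. \<exists>d>0. \<forall>y. norm (y - mu') < d \<longrightarrow> norm (F y - F mu' - F' (y - mu')) \<le> e * norm (y - mu')"
    by (simp add: has_derivative_at_alt)
  have Dscale: "D (t *\<^sub>R h) = t * D h" for t
    using linear_scale[OF lin] by simp
  have key: "\<bar>D h - T 0\<bar> \<le> e * C2" if e: "e > 0" for e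
  proof -
    obtain d where d: "d > 0" and dd: "\<And>y. norm (y - mu') < d \<Longrightarrow> \<bar>F y - F mu' - F' (y - mu')\<bar> \<le> e * norm (y - mu')"
      using eps e by force
    define \<delta> where "\<delta> = min 1 (d / C2)"
    have \<delta>0: "\<delta> > 0" unfolding \<delta>_def using d C2pos by simp
    show ?thesis
    proof (rule le_of_small[OF \<delta>0, where A="L / 2 * (norm h)\<^sup>2 + C1"])
      show "0 \<le> L / 2 * (norm h)\<^sup>2 + C1" using L C10 by simp
      fix t assume t0: "0 < t" and tl: "t < \<delta>"
      have t1: "0 \<le> t" "t \<le> 1" using t0 tl unfolding \<delta>_def by auto
      have "C2 * t < C2 * (d / C2)"
        using tl C2pos unfolding \<delta>_def by (intro mult_strict_left_mono) auto
      then have "C2 * t < d" using C2pos by simp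
      then have nd: "norm (occ P rho \<gamma> (pt t) - mu') < d" using mudiff[OF t1] by linarith
      have A2: "\<bar>F (occ P rho \<gamma> (pt t)) - F mu' - t * T t\<bar> \<le> e * (C2 * t)"
      proof -
        have "\<bar>F (occ P rho \<gamma> (pt t)) - F mu' - t * T t\<bar> \<le> e * norm (occ P rho \<gamma> (pt t) - mu')"
          using dd[OF nd] unfolding F'rep pdl_t[OF t1] .
        also have "\<dots> \<le> e * (C2 * t)" by (intro mult_left_mono mudiff[OF t1]) (use e in simp)
        finally show ?thesis .
      qed
      have A1: "\<bar>F (occ P rho \<gamma> (pt t)) - F mu' - t * D h\<bar> \<le> L / 2 * t\<^sup>2 * (norm h)\<^sup>2"
      proof -
        have "\<bar>F (occ P rho \<gamma> (pt t)) - F mu' - D (pt t - p')\<bar> \<le> L / 2 * (norm (pt t - p'))\<^sup>2"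
          using sm pt_pol[OF t1] unfolding mu'_def by blast
        moreover have "(norm (pt t - p'))\<^sup>2 = t\<^sup>2 * (norm h)\<^sup>2"
          unfolding ptd using t1 by (simp add: power_mult_distrib)
        ultimately show ?thesis unfolding ptd Dscale by (simp add: mult.assoc)
      qed
      have "\<bar>t * D h - t * T t\<bar> \<le> L / 2 * t\<^sup>2 * (norm h)\<^sup>2 + e * (C2 * t)"
        using A1 A2 by linarith
      moreover have "\<bar>t * D h - t * T t\<bar> = t * \<bar>D h - T t\<bar>"
      proof -
        have "t * D h - t * T t = t * (D h - T t)" by (simp add: right_diff_distrib)
        then show ?thesis using t0 by (simp add: abs_mult)
      qed
      moreover have "L / 2 * t\<^sup>2 * (norm h)\<^sup>2 + e * (C2 * t) = t * (L / 2 * t * (norm h)\<^sup>2 + e * C2)"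
        by (simp add: power2_eq_square distrib_left mult_ac)
      ultimately have "t * \<bar>D h - T t\<bar> \<le> t * (L / 2 * t * (norm h)\<^sup>2 + e * C2)"
        by simp
      then have c1: "\<bar>D h - T t\<bar> \<le> L / 2 * t * (norm h)\<^sup>2 + e * C2"
        using t0 by (simp add: mult_le_cancel_left_pos)
      have c2: "\<bar>T t - T 0\<bar> \<le> C1 * t" by (rule Tdiff[OF t1])
      have c3: "\<bar>D h - T 0\<bar> \<le> \<bar>D h - T t\<bar> + \<bar>T t - T 0\<bar>" by arith
      have c4: "(L / 2 * (norm h)\<^sup>2 + C1) * t + e * C2 = L / 2 * t * (norm h)\<^sup>2 + e * C2 + C1 * t"
        by (simp add: field_simps)
      show "\<bar>D h - T 0\<bar> \<le> (L / 2 * (norm h)\<^sup>2 + C1) * t + e * C2"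
        unfolding c4 using c1 c2 c3 by linarith
    qed
  qed
  have "\<bar>D h - T 0\<bar> \<le> 0"
    by (rule le_of_eps[where C=C2]) (use C2pos key in auto)
  then have "D h = T 0" by simp
  then show ?thesis unfolding h_def T_def pt0 Q_def \<Gamma>_def by simp
qed

end


lemma closed_prob_simplex: "closed (prob_simplex :: (real ^ 'a::finite) set)"
  unfolding prob_simplex_def
  by (intro closed_Collect_conj closed_Collect_all closed_Collect_le closed_Collect_eq continuous_intros)

lemma prob_simplex_ne: "(prob_simplex :: (real ^ 'a::finite) set) \<noteq> {}"
proof -
  define x :: "real ^ 'a" where "x = (\<chi> a. if a = undefined then 1 else 0)"
  have "(\<Sum>a\<in>UNIV. x $ a) = 1" unfolding x_def by (simp add: sum.delta')
  then have "x \<in> prob_simplex" unfolding prob_simplex_def x_def by simp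
  then show ?thesis by blast
qed

lemma norm_sq_vec: "(norm v)\<^sup>2 = (\<Sum>a\<in>UNIV. (v $ a)\<^sup>2)" for v :: "real ^ 'a::finite"
  unfolding power2_norm_eq_inner inner_vec_def by (simp add: power2_eq_square)

lemma proj_ineq:
  fixes z x :: "real ^ 'a::finite"
  assumes x: "x \<in> prob_simplex"
  shows "(\<Sum>a\<in>UNIV. (z $ a - closest_point prob_simplex z $ a)\<^sup>2) \<le> (\<Sum>a\<in>UNIV. (z $ a - x $ a)\<^sup>2)"
proof -
  have "dist z (closest_point prob_simplex z) \<le> dist z x"
    by (rule closest_point_le[OF closed_prob_simplex x])
  then have "(norm (z - closest_point prob_simplex z))\<^sup>2 \<le> (norm (z - x))\<^sup>2"
    by (simp add: dist_norm power_mono)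
  then show ?thesis unfolding norm_sq_vec by simp
qed

lemma pqa_comp: "pqa_step P rho \<gamma> F \<eta> p $ (s, a) =
   closest_point prob_simplex (\<chi> b. p $ (s, b) + \<eta> * Qfun P \<gamma> p (pseudo_reward P rho \<gamma> F p) $ (s, b)) $ a"
  by (simp add: pqa_step_def Let_def)

lemma pqa_policy: "pqa_step P rho \<gamma> F \<eta> p \<in> policies"
proof -
  have "(\<chi> a. pqa_step P rho \<gamma> F \<eta> p $ (s, a)) \<in> prob_simplex" for s
  proof -
    have "(\<chi> a. pqa_step P rho \<gamma> F \<eta> p $ (s, a)) =
      closest_point prob_simplex (\<chi> b. p $ (s, b) + \<eta> * Qfun P \<gamma> p (pseudo_reward P rho \<gamma> F p) $ (s, b))"
      unfolding pqa_comp by (simp add: vec_eq_iff)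
    then show ?thesis using closest_point_in_set[OF closed_prob_simplex prob_simplex_ne] by simp
  qed
  then show ?thesis unfolding policies_def by simp
qed

lemma row_in_simplex: "v \<in> policies \<Longrightarrow> (\<chi> a. v $ (s, a)) \<in> prob_simplex"
  unfolding policies_def by simp

lemma div_step:
  fixes A1 A2 B1 B2 \<eta> :: real
  assumes "\<eta> > 0" "A1 - 2 * \<eta> * B1 \<le> A2 - 2 * \<eta> * B2"
  shows "B2 - A2 / (2 * \<eta>) \<le> B1 - A1 / (2 * \<eta>)"
proof -
  have "(A1 - 2 * \<eta> * B1) / (2 * \<eta>) \<le> (A2 - 2 * \<eta> * B2) / (2 * \<eta>)"
    using assms by (intro divide_right_mono) auto
  then show ?thesis using assms(1) by (simp add: diff_divide_distrib)
qed

lemma sum_sq_expand: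
  fixes q x :: "'a::finite \<Rightarrow> real"
  shows "(\<Sum>a\<in>UNIV. (e * q a - x a)\<^sup>2) = (\<Sum>a\<in>UNIV. (x a)\<^sup>2) - 2 * e * (\<Sum>a\<in>UNIV. x a * q a) + (\<Sum>a\<in>UNIV. (e * q a)\<^sup>2)"
proof -
  have "(\<Sum>a\<in>UNIV. (e * q a - x a)\<^sup>2) = (\<Sum>a\<in>UNIV. (x a)\<^sup>2 - 2 * e * (x a * q a) + (e * q a)\<^sup>2)"
    by (rule sum.cong) (simp_all add: power2_eq_square algebra_simps)
  also have "\<dots> = (\<Sum>a\<in>UNIV. (x a)\<^sup>2) - 2 * e * (\<Sum>a\<in>UNIV. x a * q a) + (\<Sum>a\<in>UNIV. (e * q a)\<^sup>2)"
    by (simp only: sum.distrib sum_subtractf sum_distrib_left[symmetric])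
  finally show ?thesis .
qed

context mdp
begin

lemma key_step:
  fixes F :: "real ^ ('s \<times> 'a) \<Rightarrow> real" and D :: "real ^ ('s \<times> 'a) \<Rightarrow> real"
  assumes p: "p \<in> policies" and v: "v \<in> policies"
    and diff: "F differentiable (at (occ P rho \<gamma> p))"
    and lin: "linear D" and L: "0 < L" and rm: "0 < rho_min" "\<forall>s. rho_min \<le> rho s"
    and sm: "\<forall>p'\<in>policies. \<bar>F (occ P rho \<gamma> p') - F (occ P rho \<gamma> p) - D (p' - p)\<bar> \<le> L / 2 * (norm (p' - p))\<^sup>2"
  shows "F (occ P rho \<gamma> v) - F (occ P rho \<gamma> (pqa_step P rho \<gamma> F (rho_min / L) p))
     \<le> (L / rho_min) * (\<Sum>s\<in>UNIV. dd p s * (\<Sum>a\<in>UNIV. (v $ (s,a) - p $ (s,a))\<^sup>2))"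
proof -
  define \<eta> where "\<eta> = rho_min / L"
  have \<eta>0: "0 < \<eta>" unfolding \<eta>_def using L rm by simp
  define p1 where "p1 = pqa_step P rho \<gamma> F \<eta> p"
  have p1: "p1 \<in> policies" unfolding p1_def by (rule pqa_policy)
  define Q where "Q = Qfun P \<gamma> p (grad F (occ P rho \<gamma> p))"
  have Dform: "D (x - p) = (\<Sum>s\<in>UNIV. dd p s * (\<Sum>a\<in>UNIV. (x $ (s,a) - p $ (s,a)) * Q $ (s,a)))"
    if "x \<in> policies" for x
    unfolding Q_def by (rule deriv_ident[OF p that diff lin _ sm]) (use L in simp)
  define S where "S x = (\<Sum>s\<in>UNIV. dd p s * ((\<Sum>a\<in>UNIV. (x $ (s,a) - p $ (s,a))\<^sup>2) / (2 * \<eta>)))" for x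
  have proj: "(\<Sum>a\<in>UNIV. (p1 $ (s,a) - p $ (s,a)) * Q $ (s,a)) - (\<Sum>a\<in>UNIV. (p1 $ (s,a) - p $ (s,a))\<^sup>2) / (2 * \<eta>)
      \<ge> (\<Sum>a\<in>UNIV. (v $ (s,a) - p $ (s,a)) * Q $ (s,a)) - (\<Sum>a\<in>UNIV. (v $ (s,a) - p $ (s,a))\<^sup>2) / (2 * \<eta>)" for s
  proof -
    define z where "z = (\<chi> b. p $ (s, b) + \<eta> * Q $ (s, b))"
    have c: "closest_point prob_simplex z $ a = p1 $ (s, a)" for a
      unfolding p1_def pqa_comp z_def Q_def pseudo_reward_def ..
    have "(\<Sum>a\<in>UNIV. (z $ a - closest_point prob_simplex z $ a)\<^sup>2) \<le> (\<Sum>a\<in>UNIV. (z $ a - (\<chi> a. v $ (s, a)) $ a)\<^sup>2)"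
      by (rule proj_ineq[OF row_in_simplex[OF v]])
    moreover have e1: "z $ a - closest_point prob_simplex z $ a = \<eta> * Q $ (s,a) - (p1 $ (s,a) - p $ (s,a))" for a
      unfolding c by (simp add: z_def)
    moreover have e2: "z $ a - (\<chi> a. v $ (s, a)) $ a = \<eta> * Q $ (s,a) - (v $ (s,a) - p $ (s,a))" for a
      by (simp add: z_def)
    ultimately have "(\<Sum>a\<in>UNIV. (\<eta> * Q $ (s,a) - (p1 $ (s,a) - p $ (s,a)))\<^sup>2) \<le> (\<Sum>a\<in>UNIV. (\<eta> * Q $ (s,a) - (v $ (s,a) - p $ (s,a)))\<^sup>2)"
      by (simp only: e1 e2)
    then have "(\<Sum>a\<in>UNIV. (p1 $ (s,a) - p $ (s,a))\<^sup>2) - 2 * \<eta> * (\<Sum>a\<in>UNIV. (p1 $ (s,a) - p $ (s,a)) * Q $ (s,a))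
        \<le> (\<Sum>a\<in>UNIV. (v $ (s,a) - p $ (s,a))\<^sup>2) - 2 * \<eta> * (\<Sum>a\<in>UNIV. (v $ (s,a) - p $ (s,a)) * Q $ (s,a))"
      unfolding sum_sq_expand[of \<eta> "\<lambda>a. Q $ (s,a)"] by linarith
    then show ?thesis by (rule div_step[OF \<eta>0])
  qed
  have sumproj: "D (p1 - p) - S p1 \<ge> D (v - p) - S v"
  proof -
    have "(\<Sum>s\<in>UNIV. dd p s * ((\<Sum>a\<in>UNIV. (v $ (s,a) - p $ (s,a)) * Q $ (s,a)) - (\<Sum>a\<in>UNIV. (v $ (s,a) - p $ (s,a))\<^sup>2) / (2 * \<eta>)))
      \<le> (\<Sum>s\<in>UNIV. dd p s * ((\<Sum>a\<in>UNIV. (p1 $ (s,a) - p $ (s,a)) * Q $ (s,a)) - (\<Sum>a\<in>UNIV. (p1 $ (s,a) - p $ (s,a))\<^sup>2) / (2 * \<eta>)))"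
      by (intro sum_mono mult_left_mono proj dd_nonneg[OF p])
    then show ?thesis unfolding Dform[OF p1] Dform[OF v] S_def
      by (simp add: right_diff_distrib sum_subtractf)
  qed
  have normS: "L / 2 * (norm (x - p))\<^sup>2 \<le> S x" for x
  proof -
    have "L / 2 * (norm (x - p))\<^sup>2 = (\<Sum>s\<in>UNIV. L / 2 * (\<Sum>a\<in>UNIV. (x $ (s,a) - p $ (s,a))\<^sup>2))"
      unfolding norm_sq_pair by (simp add: sum_distrib_left)
    also have "\<dots> \<le> S x"
      unfolding S_def
    proof (intro sum_mono)
      fix s
      have "L / 2 \<le> dd p s / (2 * \<eta>)"
      proof -
        have "rho_min \<le> dd p s" using rm(2) dd_ge_rho[OF p, of s] by (meson order_trans)
        then have "L * rho_min \<le> L * dd p s" using L by simp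
        then show ?thesis unfolding \<eta>_def using L rm(1) by (simp add: field_simps)
      qed
      then have "L / 2 * (\<Sum>a\<in>UNIV. (x $ (s,a) - p $ (s,a))\<^sup>2) \<le> dd p s / (2 * \<eta>) * (\<Sum>a\<in>UNIV. (x $ (s,a) - p $ (s,a))\<^sup>2)"
        by (intro mult_right_mono sum_nonneg) auto
      then show "L / 2 * (\<Sum>a\<in>UNIV. (x $ (s,a) - p $ (s,a))\<^sup>2) \<le> dd p s * ((\<Sum>a\<in>UNIV. (x $ (s,a) - p $ (s,a))\<^sup>2) / (2 * \<eta>))"
        by simp
    qed
    finally show ?thesis .
  qed
  have s1: "F (occ P rho \<gamma> p1) \<ge> F (occ P rho \<gamma> p) + D (p1 - p) - L / 2 * (norm (p1 - p))\<^sup>2"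
  proof -
    have "\<bar>F (occ P rho \<gamma> p1) - F (occ P rho \<gamma> p) - D (p1 - p)\<bar> \<le> L / 2 * (norm (p1 - p))\<^sup>2"
      using sm p1 by blast
    then show ?thesis unfolding abs_le_iff by linarith
  qed
  have s2: "F (occ P rho \<gamma> v) \<le> F (occ P rho \<gamma> p) + D (v - p) + L / 2 * (norm (v - p))\<^sup>2"
  proof -
    have "\<bar>F (occ P rho \<gamma> v) - F (occ P rho \<gamma> p) - D (v - p)\<bar> \<le> L / 2 * (norm (v - p))\<^sup>2"
      using sm v by blast
    then show ?thesis unfolding abs_le_iff by linarith
  qed
  have "F (occ P rho \<gamma> v) - F (occ P rho \<gamma> p1) \<le> 2 * S v"
    using s1 s2 sumproj normS[of p1] normS[of v] by linarith
  also have "2 * S v = (L / rho_min) * (\<Sum>s\<in>UNIV. dd p s * (\<Sum>a\<in>UNIV. (v $ (s,a) - p $ (s,a))\<^sup>2))"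
  proof -
    define W where "W = (\<Sum>s\<in>UNIV. dd p s * (\<Sum>a\<in>UNIV. (v $ (s,a) - p $ (s,a))\<^sup>2))"
    have "S v = (\<Sum>s\<in>UNIV. dd p s * (\<Sum>a\<in>UNIV. (v $ (s,a) - p $ (s,a))\<^sup>2) / (2 * \<eta>))"
      unfolding S_def by (rule sum.cong) simp_all
    also have "\<dots> = W / (2 * \<eta>)" unfolding W_def by (rule sum_divide_distrib[symmetric])
    finally have "S v = W / (2 * \<eta>)" .
    then show ?thesis unfolding W_def[symmetric] \<eta>_def using L rm(1) by (simp add: field_simps)
  qed
  finally show ?thesis unfolding p1_def \<eta>_def .
qed

end


context mdp
begin

lemma mix_bound:
  assumes pk: "pk \<in> policies" and ps: "ps \<in> policies" and q: "q \<in> policies"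
    and a0: "0 \<le> \<alpha>" and a1: "\<alpha> < 1" and rm: "0 < rho_min" "\<forall>s. rho_min \<le> rho s"
    and qocc: "occ P rho \<gamma> q = (1 - \<alpha>) *\<^sub>R occ P rho \<gamma> pk + \<alpha> *\<^sub>R occ P rho \<gamma> ps"
  shows "(\<Sum>s\<in>UNIV. dd pk s * (\<Sum>a\<in>UNIV. (q $ (s,a) - pk $ (s,a))\<^sup>2))
     \<le> 2 * \<alpha>\<^sup>2 / ((1 - \<alpha>) * rho_min) * (1 / (1 - \<gamma>))\<^sup>2"
proof -
  have ddq: "dd q s = (1 - \<alpha>) * dd pk s + \<alpha> * dd ps s" for s
  proof -
    have "dd q s = (\<Sum>a\<in>UNIV. occ P rho \<gamma> q $ (s,a))" by (rule occ_row_sum[symmetric, OF q])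
    also have "\<dots> = (\<Sum>a\<in>UNIV. (1 - \<alpha>) * occ P rho \<gamma> pk $ (s,a) + \<alpha> * occ P rho \<gamma> ps $ (s,a))"
      unfolding qocc by simp
    also have "\<dots> = (1 - \<alpha>) * dd pk s + \<alpha> * dd ps s"
      by (simp add: sum.distrib sum_distrib_left[symmetric] occ_row_sum[OF pk] occ_row_sum[OF ps])
    finally show ?thesis .
  qed
  have qdiff: "(q $ (s,a) - pk $ (s,a)) * dd q s = \<alpha> * dd ps s * (ps $ (s,a) - pk $ (s,a))" for s a
  proof -
    have "dd q s * q $ (s,a) = (1 - \<alpha>) * (dd pk s * pk $ (s,a)) + \<alpha> * (dd ps s * ps $ (s,a))"
      using arg_cong[OF qocc, of "\<lambda>v. v $ (s,a)"] by (simp add: occ_eq[OF q] occ_eq[OF pk] occ_eq[OF ps])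
    then show ?thesis unfolding ddq by (simp add: algebra_simps)
  qed
  have ddq_ge: "rho_min \<le> dd q s" for s using rm(2) dd_ge_rho[OF q, of s] by (meson order_trans)
  have ddq_ge2: "(1 - \<alpha>) * dd pk s \<le> dd q s" for s
    unfolding ddq using a0 dd_nonneg[OF ps, of s] by simp
  have per_s: "dd pk s * (\<Sum>a\<in>UNIV. (q $ (s,a) - pk $ (s,a))\<^sup>2) \<le> 2 * \<alpha>\<^sup>2 / ((1 - \<alpha>) * rho_min) * (dd ps s)\<^sup>2" for s
  proof -
    define r where "r = \<alpha> * dd ps s / dd q s"
    have dq0: "0 < dd q s" using ddq_ge[of s] rm(1) by simp
    have "q $ (s,a) - pk $ (s,a) = r * (ps $ (s,a) - pk $ (s,a))" for a
      using qdiff[of s a] dq0 unfolding r_def by (simp add: field_simps)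
    then have "(\<Sum>a\<in>UNIV. (q $ (s,a) - pk $ (s,a))\<^sup>2) = r\<^sup>2 * (\<Sum>a\<in>UNIV. (ps $ (s,a) - pk $ (s,a))\<^sup>2)"
      by (simp add: power_mult_distrib sum_distrib_left)
    also have "\<dots> \<le> r\<^sup>2 * 2" by (intro mult_left_mono row_sq_le2[OF ps pk]) simp
    finally have A: "(\<Sum>a\<in>UNIV. (q $ (s,a) - pk $ (s,a))\<^sup>2) \<le> 2 * r\<^sup>2" by simp
    have B: "dd pk s * ((1 - \<alpha>) * rho_min) \<le> (dd q s)\<^sup>2"
    proof -
      have "dd pk s * ((1 - \<alpha>) * rho_min) = ((1 - \<alpha>) * dd pk s) * rho_min" by simp
      also have "\<dots> \<le> dd q s * dd q s"
        by (intro mult_mono ddq_ge2 ddq_ge) (use dq0 rm(1) in auto)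
      finally show ?thesis by (simp add: power2_eq_square)
    qed
    have "dd pk s * (\<Sum>a\<in>UNIV. (q $ (s,a) - pk $ (s,a))\<^sup>2) \<le> dd pk s * (2 * r\<^sup>2)"
      by (intro mult_left_mono A dd_nonneg[OF pk])
    also have "\<dots> = 2 * (\<alpha> * dd ps s)\<^sup>2 * (dd pk s / (dd q s)\<^sup>2)"
      unfolding r_def by (simp add: power_divide)
    also have "\<dots> \<le> 2 * (\<alpha> * dd ps s)\<^sup>2 * (1 / ((1 - \<alpha>) * rho_min))"
    proof (intro mult_left_mono)
      show "dd pk s / (dd q s)\<^sup>2 \<le> 1 / ((1 - \<alpha>) * rho_min)"
        using B dq0 a1 rm(1) by (simp add: divide_simps mult.commute)
    qed simp
    also have "\<dots> = 2 * \<alpha>\<^sup>2 / ((1 - \<alpha>) * rho_min) * (dd ps s)\<^sup>2"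
      by (simp add: power_mult_distrib)
    finally show ?thesis .
  qed
  have sq: "(\<Sum>s\<in>UNIV. (dd ps s)\<^sup>2) \<le> (1 / (1 - \<gamma>))\<^sup>2"
  proof -
    have "(\<Sum>s\<in>UNIV. (dd ps s)\<^sup>2) \<le> (\<Sum>s\<in>UNIV. dd ps s * (1 / (1 - \<gamma>)))"
      unfolding power2_eq_square by (intro sum_mono mult_left_mono dd_le[OF ps] dd_nonneg[OF ps])
    also have "\<dots> = (\<Sum>s\<in>UNIV. dd ps s) * (1 / (1 - \<gamma>))"
      by (rule sum_distrib_right[symmetric])
    also have "\<dots> = (1 / (1 - \<gamma>))\<^sup>2"
      by (simp only: dd_sum[OF ps] power2_eq_square)
    finally show ?thesis .
  qed
  have "(\<Sum>s\<in>UNIV. dd pk s * (\<Sum>a\<in>UNIV. (q $ (s,a) - pk $ (s,a))\<^sup>2))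
      \<le> (\<Sum>s\<in>UNIV. 2 * \<alpha>\<^sup>2 / ((1 - \<alpha>) * rho_min) * (dd ps s)\<^sup>2)"
    by (intro sum_mono per_s)
  also have "\<dots> = 2 * \<alpha>\<^sup>2 / ((1 - \<alpha>) * rho_min) * (\<Sum>s\<in>UNIV. (dd ps s)\<^sup>2)"
    by (simp add: sum_distrib_left)
  also have "\<dots> \<le> 2 * \<alpha>\<^sup>2 / ((1 - \<alpha>) * rho_min) * (1 / (1 - \<gamma>))\<^sup>2"
    by (intro mult_left_mono sq) (use a1 rm(1) in simp)
  finally show ?thesis .
qed

end

lemma frac_step:
  fixes c m :: real
  assumes "c > 0" "m \<ge> 1"
  shows "c / m - (c / m)\<^sup>2 / c \<le> c / (m + 1)"
proof -
  have "c / m - (c / m)\<^sup>2 / c - c / (m + 1) = - c / (m\<^sup>2 * (m + 1))"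
    using assms by (simp add: field_simps power2_eq_square)
  also have "\<dots> \<le> 0" using assms by (simp add: divide_nonneg_pos)
  finally show ?thesis by simp
qed

lemma recur:
  fixes \<Delta> :: "nat \<Rightarrow> real" and c :: real
  assumes c: "c > 0" and nn: "\<And>k. 0 \<le> \<Delta> k" and b: "\<And>k. \<Delta> (Suc k) \<le> c / 4"
    and r: "\<And>k \<alpha>. 0 \<le> \<alpha> \<Longrightarrow> \<alpha> \<le> 1/2 \<Longrightarrow> \<Delta> (Suc k) \<le> (1 - \<alpha>) * \<Delta> k + c / 4 * \<alpha>\<^sup>2"
    and K: "1 \<le> K"
  shows "\<Delta> K \<le> c / K"
proof -
  have step: "\<Delta> (Suc (Suc k)) \<le> \<Delta> (Suc k) - (\<Delta> (Suc k))\<^sup>2 / c" for k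
  proof -
    define x where "x = \<Delta> (Suc k)"
    have x0: "0 \<le> x" "x \<le> c / 4" using nn b unfolding x_def by auto
    have "\<Delta> (Suc (Suc k)) \<le> (1 - 2 * x / c) * x + c / 4 * (2 * x / c)\<^sup>2"
      using r[of "2 * x / c" "Suc k"] x0 c unfolding x_def by (simp add: field_simps)
    also have "\<dots> = x - x\<^sup>2 / c" using c by (simp add: field_simps power2_eq_square)
    finally show ?thesis unfolding x_def .
  qed
  have main: "\<Delta> (Suc n) \<le> c / real (Suc n)" for n
  proof (induction n)
    case 0 then show ?case using b[of 0] c by simp
  next
    case (Suc n)
    define x where "x = \<Delta> (Suc n)"
    define y where "y = c / real (Suc n)"
    have x0: "0 \<le> x" "x \<le> c / 4" "x \<le> y" using nn b Suc unfolding x_def y_def by auto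
    have s: "\<Delta> (Suc (Suc n)) \<le> x - x\<^sup>2 / c" using step[of n] unfolding x_def .
    show ?case
    proof (cases "n = 0")
      case True
      have "x - x\<^sup>2 / c \<le> x" using c by simp
      then have "\<Delta> (Suc (Suc n)) \<le> c / 4" using s x0 by linarith
      then show ?thesis using True c by simp
    next
      case False
      then have n1: "real (Suc n) \<ge> 2" by simp
      then have y2: "y \<le> c / 2" unfolding y_def using c by (simp add: field_simps)
      have "x - x\<^sup>2 / c \<le> y - y\<^sup>2 / c"
      proof -
        have "(y - x) * (x + y) \<le> (y - x) * c"
          using x0 y2 by (intro mult_left_mono) auto
        then have "y\<^sup>2 - x\<^sup>2 \<le> c * (y - x)" by (simp add: power2_eq_square algebra_simps)
        then have "(y\<^sup>2 - x\<^sup>2) / c \<le> y - x" using c by (simp add: divide_simps mult.commute)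
        then show ?thesis by (simp add: diff_divide_distrib)
      qed
      also have "\<dots> \<le> c / (real (Suc n) + 1)"
        unfolding y_def by (rule frac_step[OF c]) simp
      finally show ?thesis using s by simp
    qed
  qed
  obtain n where "K = Suc n" using K by (cases K) auto
  then show ?thesis using main[of n] by simp
qed



lemma eq_aux:
  fixes g r k L :: real
  assumes "g > 0" "r > 0" "k > 0"
  shows "16 * L * (1 / (g * r))\<^sup>2 / k = 16 * L * (1 / (g * r)) * g / (g\<^sup>2 * r * k)"
  using assms by (simp add: field_simps power2_eq_square)

lemma aux16:
  fixes X M :: real
  assumes "X \<le> 1 + M" "0 < M"
  shows "16 * X \<le> 32 * (1 + M)"
proof -
  have "16 * X \<le> 16 * (1 + M)" using assms(1) by simp
  also have "\<dots> \<le> 32 * (1 + M)" using assms(2) by simp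
  finally show ?thesis .
qed

theorem theorem4:
  fixes P :: "'s::finite \<Rightarrow> 'a::finite \<Rightarrow> 's \<Rightarrow> real"
    and rho :: "'s \<Rightarrow> real"
    and \<gamma> :: real
    and F :: "real ^ ('s \<times> 'a) \<Rightarrow> real"
    and rho_min U L :: real
    and pi_star :: "real ^ ('s \<times> 'a)"
    and pis :: "nat \<Rightarrow> real ^ ('s \<times> 'a)"
    and K :: nat
  assumes kernel: "is_kernel P"
    and init: "is_distribution rho"
    and gamma: "0 \<le> \<gamma>" "\<gamma> < 1"
    and F_concave: "concave_on (occ_set P rho \<gamma>) F"
    and F_diff: "\<forall>mu \<in> occ_set P rho \<gamma>. F differentiable (at mu)"
    and rho_min: "0 < rho_min" "\<forall>s. rho_min \<le> rho s"
    and U: "0 \<le> U"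
    and Gamma_bounds: "\<forall>p \<in> policies. \<forall>i.
          0 \<le> pseudo_reward P rho \<gamma> F p $ i \<and> pseudo_reward P rho \<gamma> F p $ i \<le> U"
    and L: "0 < L"
    and smooth: "\<forall>p' \<in> policies. \<exists>D.
          ((\<lambda>p. F (occ P rho \<gamma> p)) has_derivative D) (at p' within policies) \<and>
          (\<forall>p \<in> policies. \<bar>F (occ P rho \<gamma> p) - F (occ P rho \<gamma> p') - D (p - p')\<bar>
               \<le> L / 2 * (norm (p - p'))\<^sup>2)"
    and opt: "pi_star \<in> policies" "\<forall>p \<in> policies. F (occ P rho \<gamma> p) \<le> F (occ P rho \<gamma> pi_star)"
    and init_policy: "pis 0 \<in> policies"
    and iter: "\<forall>k. pis (Suc k) = pqa_step P rho \<gamma> F (rho_min / L) (pis k)"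
    and K: "1 \<le> K"
  shows "F (occ P rho \<gamma> pi_star) - F (occ P rho \<gamma> (pis K))
           \<le> 32 * L * (1 + 1 / ((1 - \<gamma>) * rho_min)) / ((1 - \<gamma>)\<^sup>2 * rho_min * real K)"
proof -
  interpret mdp P rho \<gamma> using kernel init gamma by unfold_locales auto
  define G where "G p = F (occ P rho \<gamma> p)" for p
  define M where "M = 1 / ((1 - \<gamma>) * rho_min)"
  define \<Delta> where "\<Delta> k = G pi_star - G (pis k)" for k
  have g1': "0 < 1 - \<gamma>" using gamma by simp
  have rho_le1: "rho_min \<le> 1"
  proof -
    have "rho undefined \<le> (\<Sum>s\<in>UNIV. rho s)" by (rule member_le_sum) (auto intro: rho_nonneg)
    then show ?thesis using rho_min(2) rho_sum by (metis order_trans)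
  qed
  have Mpos: "0 < M" unfolding M_def using g1' rho_min(1) by simp
  have M1: "1 \<le> M"
  proof -
    have "(1 - \<gamma>) * rho_min \<le> 1 * 1" using gamma rho_le1 rho_min(1) by (intro mult_mono) auto
    then show ?thesis unfolding M_def using g1' rho_min(1) by (simp add: field_simps)
  qed
  have pol: "pis k \<in> policies" for k
  proof (induction k)
    case 0 then show ?case by (rule init_policy)
  next
    case (Suc k) then show ?case using iter pqa_policy by metis
  qed
  have nn: "0 \<le> \<Delta> k" for k unfolding \<Delta>_def G_def using opt(2) pol by simp
  have diffk: "F differentiable (at (occ P rho \<gamma> (pis k)))" for k
    using F_diff pol[of k] unfolding occ_set_def by blast
  have key: "G v - G (pis (Suc k)) \<le> (L / rho_min) * (\<Sum>s\<in>UNIV. dd (pis k) s * (\<Sum>a\<in>UNIV. (v $ (s,a) - pis k $ (s,a))\<^sup>2))"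
    if v: "v \<in> policies" for v k
  proof -
    obtain D where hd: "((\<lambda>p. F (occ P rho \<gamma> p)) has_derivative D) (at (pis k) within policies)"
      and sm: "\<forall>p \<in> policies. \<bar>F (occ P rho \<gamma> p) - F (occ P rho \<gamma> (pis k)) - D (p - pis k)\<bar>
               \<le> L / 2 * (norm (p - pis k))\<^sup>2"
      using smooth pol[of k] by blast
    have lin: "linear D" by (rule has_derivative_linear[OF hd])
    show ?thesis unfolding G_def iter[rule_format]
      by (rule key_step[OF pol v diffk lin L rho_min sm])
  qed
  have b1: "\<Delta> (Suc k) \<le> 2 * L * M" for k
  proof -
    have "(\<Sum>s\<in>UNIV. dd (pis k) s * (\<Sum>a\<in>UNIV. (pi_star $ (s,a) - pis k $ (s,a))\<^sup>2))
        \<le> (\<Sum>s\<in>UNIV. dd (pis k) s * 2)"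
      by (intro sum_mono mult_left_mono row_sq_le2[OF opt(1) pol] dd_nonneg[OF pol])
    also have "\<dots> = 2 / (1 - \<gamma>)" by (simp add: sum_distrib_right[symmetric] dd_sum[OF pol])
    finally have "(L / rho_min) * (\<Sum>s\<in>UNIV. dd (pis k) s * (\<Sum>a\<in>UNIV. (pi_star $ (s,a) - pis k $ (s,a))\<^sup>2))
        \<le> (L / rho_min) * (2 / (1 - \<gamma>))"
      using L rho_min(1) by (intro mult_left_mono) auto
    also have "\<dots> = 2 * L * M" unfolding M_def by (simp add: field_simps)
    finally show ?thesis using key[OF opt(1), of k] unfolding \<Delta>_def by linarith
  qed
  have cvx: "convex (occ_set P rho \<gamma>)" using F_concave by (simp add: concave_on_iff)
  have rec: "\<Delta> (Suc k) \<le> (1 - \<alpha>) * \<Delta> k + 4 * L * M\<^sup>2 * \<alpha>\<^sup>2" if a: "0 \<le> \<alpha>" "\<alpha> \<le> 1/2" for k \<alpha>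
  proof -
    define mu where "mu = (1 - \<alpha>) *\<^sub>R occ P rho \<gamma> (pis k) + \<alpha> *\<^sub>R occ P rho \<gamma> pi_star"
    have in1: "occ P rho \<gamma> (pis k) \<in> occ_set P rho \<gamma>" unfolding occ_set_def using pol by blast
    have in2: "occ P rho \<gamma> pi_star \<in> occ_set P rho \<gamma>" unfolding occ_set_def using opt(1) by blast
    have "mu \<in> occ_set P rho \<gamma>" unfolding mu_def
      by (rule convexD[OF cvx in1 in2]) (use a in auto)
    then obtain q where q: "q \<in> policies" and qocc: "occ P rho \<gamma> q = mu"
      unfolding occ_set_def by blast
    have conc: "F mu \<ge> (1 - \<alpha>) * G (pis k) + \<alpha> * G pi_star"
      unfolding mu_def G_def by (rule concave_onD[OF F_concave]) (use a in1 in2 in auto)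
    have mb: "(\<Sum>s\<in>UNIV. dd (pis k) s * (\<Sum>a\<in>UNIV. (q $ (s,a) - pis k $ (s,a))\<^sup>2))
        \<le> 2 * \<alpha>\<^sup>2 / ((1 - \<alpha>) * rho_min) * (1 / (1 - \<gamma>))\<^sup>2"
      by (rule mix_bound[OF pol opt(1) q a(1) _ rho_min]) (use a qocc mu_def in auto)
    have "(L / rho_min) * (\<Sum>s\<in>UNIV. dd (pis k) s * (\<Sum>a\<in>UNIV. (q $ (s,a) - pis k $ (s,a))\<^sup>2))
        \<le> (L / rho_min) * (2 * \<alpha>\<^sup>2 / ((1 - \<alpha>) * rho_min) * (1 / (1 - \<gamma>))\<^sup>2)"
      using L rho_min(1) by (intro mult_left_mono mb) auto
    also have "\<dots> = 2 * L * M\<^sup>2 * \<alpha>\<^sup>2 / (1 - \<alpha>)"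
      unfolding M_def using a g1' by (simp add: field_simps power2_eq_square)
    also have "\<dots> \<le> 4 * L * M\<^sup>2 * \<alpha>\<^sup>2"
    proof -
      have "1 / (1 - \<alpha>) \<le> 2" using a by (simp add: field_simps)
      then have "2 * L * M\<^sup>2 * \<alpha>\<^sup>2 * (1 / (1 - \<alpha>)) \<le> 2 * L * M\<^sup>2 * \<alpha>\<^sup>2 * 2"
        using L by (intro mult_left_mono) auto
      then show ?thesis by simp
    qed
    finally have "G q - G (pis (Suc k)) \<le> 4 * L * M\<^sup>2 * \<alpha>\<^sup>2" using key[OF q, of k] by linarith
    moreover have "G q = F mu" unfolding G_def qocc ..
    ultimately show ?thesis using conc unfolding \<Delta>_def by (simp add: algebra_simps)
  qed
  define c where "c = 16 * L * M\<^sup>2"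
  have c0: "c > 0" unfolding c_def using L Mpos by simp
  have "\<Delta> K \<le> c / K"
  proof (rule recur[OF c0 nn _ _ K])
    fix k
    have "2 * L * M \<le> 4 * L * M\<^sup>2"
    proof -
      have "M \<le> 2 * M\<^sup>2" using M1 by (simp add: power2_eq_square)
      then show ?thesis using L by (simp add: mult_left_mono)
    qed
    then show "\<Delta> (Suc k) \<le> c / 4" using b1[of k] unfolding c_def by simp
  next
    fix k and \<alpha> :: real assume a: "0 \<le> \<alpha>" "\<alpha> \<le> 1/2"
    have eq: "c / 4 * \<alpha>\<^sup>2 = 4 * L * M\<^sup>2 * \<alpha>\<^sup>2" unfolding c_def by simp
    show "\<Delta> (Suc k) \<le> (1 - \<alpha>) * \<Delta> k + c / 4 * \<alpha>\<^sup>2" unfolding eq by (rule rec[OF a])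
  qed
  also have "c / K \<le> 32 * L * (1 + 1 / ((1 - \<gamma>) * rho_min)) / ((1 - \<gamma>)\<^sup>2 * rho_min * real K)"
  proof -
    have K0: "0 < real K" using K by simp
    have eq: "c / K = 16 * L * M * (1 - \<gamma>) / ((1 - \<gamma>)\<^sup>2 * rho_min * real K)"
      unfolding c_def M_def by (rule eq_aux[OF g1' rho_min(1) K0])
    have "16 * L * M * (1 - \<gamma>) \<le> 32 * L * (1 + M)"
    proof -
      have "M * (1 - \<gamma>) \<le> (1 + M) * 1" using Mpos gamma by (intro mult_mono) auto
      then have "16 * (M * (1 - \<gamma>)) \<le> 32 * (1 + M)" using Mpos by (intro aux16) simp_all
      then have "L * (16 * (M * (1 - \<gamma>))) \<le> L * (32 * (1 + M))" using L by (intro mult_left_mono) auto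
      then show ?thesis by (simp only: mult_ac)
    qed
    then have "16 * L * M * (1 - \<gamma>) / ((1 - \<gamma>)\<^sup>2 * rho_min * real K) \<le> 32 * L * (1 + M) / ((1 - \<gamma>)\<^sup>2 * rho_min * real K)"
      using g1' rho_min(1) K0 by (intro divide_right_mono) auto
    then show ?thesis unfolding eq M_def .
  qed
  finally show ?thesis unfolding \<Delta>_def G_def .
qed


end
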